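(* Let $\Gamma$ and $\Gamma'$ be two quantum covariance matrices of size $2S\times 2S$ having the same eigenspectrum $\Lambda=(\lambda_i)_{i=1}^{2S}$ (eigenvalues listed with multiplicity in non-ascending order). Suppose that $\Lambda$ satisfies the $(S-1)$-pure unique pairing condition. Then $\Gamma'$ is an orthogonal-symplectic transform of $\Gamma$, i.e. there exists $W\in\mathrm{SpO}(2S,\mathbb{R})$ with $\Gamma'=W\Gamma W^T$.
   Context: Fix an integer $S\ge 1$. Coordinates of $\mathbb{R}^{2S}$ are ordered as $(q_1,p_1,\dots,q_S,p_S)$; coordinates $2i-1$ and $2i$ form the $i$-th mode (a pair of conjugate coordinates). Let $\Omega=\bigoplus_{i=1}^S\begin{pmatrix}0&1\\-1&0\end{pmatrix}$. A real $2S\times 2S$ matrix $A$ is symplectic if $A^T\Omega A=\Omega$. $\mathrm{SpO}(2S,\mathbb{R})$ denotes the group of real $2S\times2S$ matrices that are both orthogonal and symplectic. A quantum covariance matrix (quantum CM) is a real symmetric positive-definite $2S\times 2S$ matrix $\Gamma$ such that the Hermitian matrix $\Gamma+i\Omega$ is positive semidefinite. Let $\Lambda=(\lambda_i)_{i=1}^{2S}$ be the eigenvalues of a quantum CM in non-ascending order. Let $G(\Lambda)$ be the graph with vertex set $\{1,\dots,2S\}$ and edge set $\{\{i,j\}: i<j,\ \lambda_i\lambda_j\ge 1\}$; an edge $\{i,j\}$ is pure if $\lambda_i\lambda_j=1$. $\Lambda$ satisfies the unique pairing condition if $G(\Lambda)$ has a unique perfect matching up to permutations of vertices carrying equal eigenvalues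 (i.e. for any two perfect matchings $M,M'$ there is a permutation $\pi$ of $\{1,\dots,2S\}$ with $\lambda_{\pi(i)}=\lambda_i$ for all $i$ mapping $M$ onto $M'$). $\Lambda$ satisfies the $t$-pure unique pairing condition if it satisfies the unique pairing condition and at least $t$ of the $S$ edges of this perfect matching are pure. *)

theory Defs
  imports "Jordan_Normal_Form.Char_Poly"
begin

(* Coordinates are 0-indexed: index 2k and 2k+1 (k < S) form the (k+1)-th mode (q_{k+1}, p_{k+1}). *)

definition Omega :: "nat \<Rightarrow> real mat" where
  "Omega S = mat (2*S) (2*S) (\<lambda>(i,j).
      if even i \<and> j = i + 1 then 1
      else if odd i \<and> i = j + 1 then -1 else 0)"

definition symplectic_mat :: "nat \<Rightarrow> real mat \<Rightarrow> bool" where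
  "symplectic_mat S A \<longleftrightarrow> A \<in> carrier_mat (2*S) (2*S) \<and>
     transpose_mat A * Omega S * A = Omega S"

definition orthogonal_real_mat :: "nat \<Rightarrow> real mat \<Rightarrow> bool" where
  "orthogonal_real_mat S A \<longleftrightarrow> A \<in> carrier_mat (2*S) (2*S) \<and>
     transpose_mat A * A = 1\<^sub>m (2*S)"

definition SpO :: "nat \<Rightarrow> real mat set" where
  "SpO S = {A. orthogonal_real_mat S A \<and> symplectic_mat S A}"

definition hermitian_psd :: "nat \<Rightarrow> complex mat \<Rightarrow> bool" where
  "hermitian_psd n M \<longleftrightarrow> M \<in> carrier_mat n n \<and>
     (\<forall>i<n. \<forall>j<n. M $$ (i,j) = cnj (M $$ (j,i))) \<and>
     (\<forall>v \<in> carrier_vec n.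
        let q = (\<Sum>i<n. \<Sum>j<n. cnj (v $ i) * M $$ (i,j) * v $ j)
        in Im q = 0 \<and> Re q \<ge> 0)"

definition quantum_CM :: "nat \<Rightarrow> real mat \<Rightarrow> bool" where
  "quantum_CM S G \<longleftrightarrow> G \<in> carrier_mat (2*S) (2*S) \<and>
     transpose_mat G = G \<and>
     (\<forall>v \<in> carrier_vec (2*S). v \<noteq> 0\<^sub>v (2*S) \<longrightarrow> v \<bullet> (G *\<^sub>v v) > 0) \<and>
     hermitian_psd (2*S) (map_mat complex_of_real G + \<i> \<cdot>\<^sub>m map_mat complex_of_real (Omega S))"

definition eigenspectrum :: "nat \<Rightarrow> real mat \<Rightarrow> real list \<Rightarrow> bool" where
  "eigenspectrum S G Lam \<longleftrightarrow> G \<in> carrier_mat (2*S) (2*S) \<and> length Lam = 2*S \<and>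
     sorted_wrt (\<ge>) Lam \<and>
     char_poly G = prod_list (map (\<lambda>l. [:- l, 1:]) Lam)"

(* Graph G(Lambda) on vertices {0..<2S} (0-indexed version of {1..2S}). *)
definition lam_edge :: "real list \<Rightarrow> nat set \<Rightarrow> bool" where
  "lam_edge Lam e \<longleftrightarrow> (\<exists>i j. e = {i,j} \<and> i < j \<and> j < length Lam \<and> Lam ! i * Lam ! j \<ge> 1)"

definition pure_edge :: "real list \<Rightarrow> nat set \<Rightarrow> bool" where
  "pure_edge Lam e \<longleftrightarrow> (\<exists>i j. e = {i,j} \<and> i < j \<and> j < length Lam \<and> Lam ! i * Lam ! j = 1)"

definition perfect_matching :: "real list \<Rightarrow> nat set set \<Rightarrow> bool" where
  "perfect_matching Lam M \<longleftrightarrow> (\<forall>e\<in>M. lam_edge Lam e) \<and>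
     (\<forall>v < length Lam. \<exists>!e. e \<in> M \<and> v \<in> e)"

definition unique_pairing :: "real list \<Rightarrow> bool" where
  "unique_pairing Lam \<longleftrightarrow> (\<exists>M. perfect_matching Lam M) \<and>
     (\<forall>M M'. perfect_matching Lam M \<longrightarrow> perfect_matching Lam M' \<longrightarrow>
        (\<exists>\<pi>. \<pi> permutes {0..<length Lam} \<and> (\<forall>i < length Lam. Lam ! (\<pi> i) = Lam ! i) \<and>
             (\<lambda>e. \<pi> ` e) ` M = M'))"

definition t_pure_unique_pairing :: "nat \<Rightarrow> real list \<Rightarrow> bool" where
  "t_pure_unique_pairing t Lam \<longleftrightarrow> unique_pairing Lam \<and>
     (\<exists>M. perfect_matching Lam M \<and> card {e \<in> M. pure_edge Lam e} \<ge> t)"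

end

theory Submission
  imports Defs
begin

definition refl_mat :: "nat \<Rightarrow> real vec \<Rightarrow> real mat" where
  "refl_mat n v = mat n n (\<lambda>(i,j). (if i = j then 1 else 0) - 2 * v$i * v$j / (v \<bullet> v))"

lemma refl_mat_carrier[simp]: "refl_mat n v \<in> carrier_mat n n"
  by (simp add: refl_mat_def)

lemma refl_mat_dim[simp]: "dim_row (refl_mat n v) = n" "dim_col (refl_mat n v) = n"
  by (auto simp: refl_mat_def)

lemma refl_mat_transpose[simp]: "transpose_mat (refl_mat n v) = refl_mat n v"
  by (rule eq_matI, auto simp: refl_mat_def)

lemma sum_delta1: "i < (n::nat) \<Longrightarrow> (\<Sum>k = 0..<n. (if i = k then 1 else 0) * f k) = (f i :: real)"
proof -
  assume i: "i < n"
  have "(\<Sum>k = 0..<n. (if i = k then 1 else 0) * f k) = (\<Sum>k = 0..<n. if i = k then f k else 0)"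
    by (rule sum.cong, auto)
  also have "\<dots> = f i" using i by (subst sum.delta') auto
  finally show ?thesis .
qed

lemma sum_delta2: "i < (n::nat) \<Longrightarrow> (\<Sum>k = 0..<n. (if k = i then 1 else 0) * f k) = (f i :: real)"
proof -
  assume i: "i < n"
  have "(\<Sum>k = 0..<n. (if k = i then 1 else 0) * f k) = (\<Sum>k = 0..<n. if k = i then f k else 0)"
    by (rule sum.cong, auto)
  also have "\<dots> = f i" using i by (subst sum.delta) auto
  finally show ?thesis .
qed

lemma refl_mat_square:
  assumes v: "v \<in> carrier_vec n"
  shows "refl_mat n v * refl_mat n v = 1\<^sub>m n"
proof (rule eq_matI)
  fix i j assume i: "i < dim_row (1\<^sub>m n)" and j: "j < dim_col (1\<^sub>m n)"
  hence i: "i < n" and j: "j < n" by auto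
  define s where "s = v \<bullet> v"
  have s: "s = (\<Sum>k = 0..<n. v$k * v$k)" using v by (simp add: s_def scalar_prod_def)
  have "(refl_mat n v * refl_mat n v) $$ (i,j) =
     (\<Sum>k = 0..<n. ((if i = k then 1 else 0) - 2 * v$i * v$k / s) * ((if k = j then 1 else 0) - 2 * v$k * v$j / s))"
    using i j by (simp add: refl_mat_def scalar_prod_def s_def row_def col_def)
  also have "\<dots> = (\<Sum>k = 0..<n. (if i = k then 1 else 0) * (if k = j then 1 else 0))
     - (\<Sum>k = 0..<n. (if i = k then 1 else 0) * (2 * v$k * v$j / s))
     - (\<Sum>k = 0..<n. (if k = j then 1 else 0) * (2 * v$i * v$k / s))
     + (4 * v$i * v$j / (s*s)) * (\<Sum>k = 0..<n. v$k * v$k)"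
    by (simp add: sum_subtractf sum.distrib sum_distrib_left sum_divide_distrib algebra_simps)
  also have "\<dots> = (if i = j then 1 else 0) - 2 * (2 * v$i * v$j / s) + (4 * v$i * v$j / (s*s)) * s"
  proof -
    have a: "(\<Sum>k = 0..<n. (if i = k then 1 else 0) * (if k = j then 1 else 0)) = (if i = j then 1 else (0::real))"
      using sum_delta1[OF i, of "\<lambda>k. if k = j then 1 else 0"] by simp
    have b: "(\<Sum>k = 0..<n. (if i = k then 1 else 0) * (2 * v$k * v$j / s)) = 2 * v$i * v$j / s"
      using sum_delta1[OF i, of "\<lambda>k. 2 * v$k * v$j / s"] by simp
    have c: "(\<Sum>k = 0..<n. (if k = j then 1 else 0) * (2 * v$i * v$k / s)) = 2 * v$i * v$j / s"
      using sum_delta2[OF j, of "\<lambda>k. 2 * v$i * v$k / s"] by simp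
    show ?thesis unfolding a b c s[symmetric] by simp
  qed
  also have "\<dots> = (if i = j then 1 else 0)"
    by (cases "s = 0", auto simp: field_simps)
  finally show "(refl_mat n v * refl_mat n v) $$ (i,j) = 1\<^sub>m n $$ (i,j)" using i j by simp
qed (use v in auto)

lemma refl_mat_vec:
  assumes v: "v \<in> carrier_vec n" and x: "x \<in> carrier_vec n"
  shows "refl_mat n v *\<^sub>v x = x - (2 * (v \<bullet> x) / (v \<bullet> v)) \<cdot>\<^sub>v v"
proof (rule eq_vecI)
  fix i assume "i < dim_vec (x - (2 * (v \<bullet> x) / (v \<bullet> v)) \<cdot>\<^sub>v v)"
  hence i: "i < n" using x v by auto
  have "(refl_mat n v *\<^sub>v x) $ i = (\<Sum>k = 0..<n. ((if i = k then 1 else 0) - 2 * v$i * v$k / (v\<bullet>v)) * x$k)"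
    using i x by (simp add: refl_mat_def scalar_prod_def row_def)
  also have "\<dots> = (\<Sum>k = 0..<n. (if i = k then 1 else 0) * x$k) - (2 * v$i / (v\<bullet>v)) * (\<Sum>k = 0..<n. v$k * x$k)"
    by (simp add: sum_subtractf sum_distrib_left algebra_simps)
  also have "\<dots> = x$i - (2 * v$i / (v\<bullet>v)) * (v \<bullet> x)"
    using i x sum_delta1[OF i, of "\<lambda>k. x$k"] by (simp add: scalar_prod_def)
  finally show "(refl_mat n v *\<^sub>v x) $ i = (x - (2 * (v \<bullet> x) / (v \<bullet> v)) \<cdot>\<^sub>v v) $ i"
    using i x v by simp
qed (use v x in auto)


definition blk :: "'a::zero mat \<Rightarrow> 'a mat \<Rightarrow> 'a mat" where
  "blk A B = four_block_mat A (0\<^sub>m (dim_row A) (dim_col B)) (0\<^sub>m (dim_row B) (dim_col A)) B"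

lemma blk_carrier[simp]: "A \<in> carrier_mat k k \<Longrightarrow> B \<in> carrier_mat m m \<Longrightarrow> blk A B \<in> carrier_mat (k+m) (k+m)"
  unfolding blk_def by auto

lemma blk_dim[simp]: "dim_row (blk A B) = dim_row A + dim_row B" "dim_col (blk A B) = dim_col A + dim_col B"
  unfolding blk_def by auto

lemma blk_mult:
  fixes A :: "'a :: semiring_1 mat"
  assumes A: "A \<in> carrier_mat k k" and B: "B \<in> carrier_mat m m" and C: "C \<in> carrier_mat k k" and D: "D \<in> carrier_mat m m"
  shows "blk A B * blk C D = blk (A * C) (B * D)"
proof -
  have "blk A B * blk C D = four_block_mat (A * C + 0\<^sub>m k m * 0\<^sub>m m k) (A * 0\<^sub>m k m + 0\<^sub>m k m * D)
    (0\<^sub>m m k * C + B * 0\<^sub>m m k) (0\<^sub>m m k * 0\<^sub>m k m + B * D)"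
    unfolding blk_def using A B C D by (subst mult_four_block_mat[of _ k k _ m _ m _ _ k _ m]) auto
  also have "\<dots> = blk (A * C) (B * D)" unfolding blk_def using A B C D
    by (intro cong_four_block_mat) auto
  finally show ?thesis .
qed

lemma blk_transpose:
  assumes A: "A \<in> carrier_mat k k" and B: "B \<in> carrier_mat m m"
  shows "transpose_mat (blk A B) = blk (transpose_mat A) (transpose_mat B)"
  unfolding blk_def using A B by (subst transpose_four_block_mat[of _ k k _ m _ m]) auto

lemma blk_one[simp]: "blk (1\<^sub>m k) (1\<^sub>m m) = 1\<^sub>m (k+m)"
  unfolding blk_def by simp

lemma char_poly_blk:
  fixes A :: "'a :: idom mat"
  assumes A: "A \<in> carrier_mat k k" and B: "B \<in> carrier_mat m m"
  shows "char_poly (blk A B) = char_poly A * char_poly B"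
proof -
  let ?cm = "\<lambda> A. [:0, 1:] \<cdot>\<^sub>m 1\<^sub>m (dim_row A) + map_mat (\<lambda>a. [:- a:]) A"
  have "char_poly (blk A B) = det (?cm (blk A B))"
    unfolding char_poly_defs by simp
  also have "?cm (blk A B) = four_block_mat (?cm A) (0\<^sub>m k m) (0\<^sub>m m k) (?cm B)"
    by (rule eq_matI, insert A B, auto simp: blk_def one_poly_def)
  also have "det \<dots> = det (?cm A) * det (?cm B)"
    by (rule det_four_block_mat_lower_left_zero, insert A B, auto)
  also have "\<dots> = char_poly A * char_poly B" unfolding char_poly_defs ..
  finally show ?thesis .
qed

lemma blk_decomp:
  assumes M: "M \<in> carrier_mat (k+m) (k+m)" and sym: "transpose_mat M = M"
    and col: "\<And>i j. i < k \<Longrightarrow> j < k + m \<Longrightarrow> M $$ (j,i) = (if j = i then d i else 0)"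
  shows "M = blk (mat k k (\<lambda>(i,j). if i = j then d i else 0)) (mat m m (\<lambda>(i,j). M $$ (i+k, j+k)))"
proof (rule eq_matI)
  fix i j assume i: "i < dim_row (blk (mat k k (\<lambda>(i,j). if i = j then d i else 0)) (mat m m (\<lambda>(i,j). M $$ (i+k, j+k))))"
    and j: "j < dim_col (blk (mat k k (\<lambda>(i,j). if i = j then d i else 0)) (mat m m (\<lambda>(i,j). M $$ (i+k, j+k))))"
  hence i: "i < k + m" and j: "j < k + m" by auto
  have symij: "M $$ (i,j) = M $$ (j,i)"
    using arg_cong[OF sym, of "\<lambda>X. X $$ (j,i)"] M i j by auto
  show "M $$ (i,j) = blk (mat k k (\<lambda>(i,j). if i = j then d i else 0)) (mat m m (\<lambda>(i,j). M $$ (i+k, j+k))) $$ (i,j)"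
    using i j col[of j i] col[of i j] symij by (auto simp: blk_def)
qed (use M in auto)

definition diagm :: "nat \<Rightarrow> 'a::zero list \<Rightarrow> 'a mat" where
  "diagm n L = mat n n (\<lambda>(i,j). if i = j then L ! i else 0)"

lemma diagm_carrier[simp]: "diagm n L \<in> carrier_mat n n" by (simp add: diagm_def)

lemma char_poly_diagm:
  fixes L :: "'a :: comm_ring_1 list"
  assumes "length L = n"
  shows "char_poly (diagm n L) = prod_list (map (\<lambda>l. [:- l, 1:]) L)"
proof -
  have "char_poly (diagm n L) = (\<Prod> a \<leftarrow> diag_mat (diagm n L). [:- a, 1:])"
    by (rule char_poly_upper_triangular[of _ n], auto simp: diagm_def upper_triangular_def)
  also have "diag_mat (diagm n L) = L" using assms
    by (auto simp: diag_mat_def diagm_def intro: nth_equalityI)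
  finally show ?thesis .
qed

lemma length_eigen:
  assumes G: "G \<in> carrier_mat n n" and cp: "char_poly G = prod_list (map (\<lambda>l. [:- l, 1:]) (Lam :: 'a :: idom list))"
  shows "length Lam = n"
proof -
  have "degree (char_poly G) = n" using degree_monic_char_poly[OF G] by auto
  moreover have "degree (prod_list (map (\<lambda>l. [:- l, 1:]) Lam)) = length Lam"
    using degree_linear_factors[of uminus Lam] by simp
  ultimately show ?thesis using cp by simp
qed


lemma sprod_self_pos:
  fixes v :: "real vec"
  assumes v: "v \<in> carrier_vec n" and nz: "v \<noteq> 0\<^sub>v n"
  shows "v \<bullet> v > 0"
proof -
  obtain i where i: "i < n" and vi: "v $ i \<noteq> 0"
  proof -
    have "\<exists>i<n. v $ i \<noteq> 0"
    proof (rule ccontr)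
      assume "\<not> ?thesis"
      hence "v = 0\<^sub>v n" using v by (intro eq_vecI) auto
      with nz show False by simp
    qed
    thus ?thesis using that by blast
  qed
  have "v \<bullet> v = (\<Sum>k\<in>{0..<n}. v$k * v$k)" using v by (simp add: scalar_prod_def)
  also have "\<dots> \<ge> v$i * v$i"
    by (rule member_le_sum[of i "{0..<n}" "\<lambda>k. v$k * v$k"]) (use i in auto)
  finally have "v \<bullet> v \<ge> v$i * v$i" .
  moreover have "v$i * v$i > 0"
  proof -
    from vi have "v$i < 0 \<or> v$i > 0" by linarith
    thus ?thesis by (auto simp: mult_neg_neg)
  qed
  ultimately show ?thesis by linarith
qed

lemma sprod_self_nonneg:
  fixes v :: "real vec"
  shows "v \<bullet> v \<ge> 0"
  unfolding scalar_prod_def by (rule sum_nonneg) auto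

lemma sprod_self_zero:
  fixes v :: "real vec"
  assumes v: "v \<in> carrier_vec n" and z: "v \<bullet> v = 0"
  shows "v = 0\<^sub>v n"
  using sprod_self_pos[OF v] z by fastforce

lemma householder_col0:
  fixes u :: "real vec"
  assumes u: "u \<in> carrier_vec n" and uu: "u \<bullet> u = 1" and n: "0 < n"
  shows "refl_mat n (unit_vec n 0 - u) *\<^sub>v unit_vec n 0 = u"
proof -
  define w where "w = unit_vec n 0 - u"
  have w: "w \<in> carrier_vec n" using u by (simp add: w_def)
  have wi: "\<And>k. k < n \<Longrightarrow> w $ k = (if 0 = k then 1 else 0) - u $ k" using u by (auto simp: w_def)
  have we: "w \<bullet> unit_vec n 0 = 1 - u $ 0" using w n wi[of 0] by simp
  have uu': "(\<Sum>k = 0..<n. u$k * u$k) = 1" using uu u by (simp add: scalar_prod_def)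
  have "w \<bullet> w = (\<Sum>k = 0..<n. ((if 0 = k then 1 else 0) - u $ k) * ((if 0 = k then 1 else 0) - u $ k))"
    using w wi by (simp add: scalar_prod_def)
  also have "\<dots> = (\<Sum>k = 0..<n. (if 0 = k then 1 else 0) * (if 0 = k then 1 else 0))
     - 2 * (\<Sum>k = 0..<n. (if 0 = k then 1 else 0) * u$k) + (\<Sum>k = 0..<n. u$k * u$k)"
    by (simp add: sum_subtractf sum.distrib sum_distrib_left algebra_simps)
  also have "\<dots> = 2 - 2 * u$0"
    using sum_delta1[OF n, of "\<lambda>k. if 0 = k then 1 else 0"] sum_delta1[OF n, of "\<lambda>k. u$k"] uu' by simp
  finally have ww: "w \<bullet> w = 2 - 2 * u$0" .
  have "refl_mat n w *\<^sub>v unit_vec n 0 = unit_vec n 0 - (2 * (w \<bullet> unit_vec n 0) / (w \<bullet> w)) \<cdot>\<^sub>v w"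
    by (rule refl_mat_vec[OF w], simp)
  also have "\<dots> = u"
  proof (cases "u $ 0 = 1")
    case True
    hence "w \<bullet> w = 0" using ww by simp
    hence "w = 0\<^sub>v n" by (rule sprod_self_zero[OF w])
    hence "\<And>k. k < n \<Longrightarrow> w $ k = 0" by simp
    hence w0: "\<And>k. k < n \<Longrightarrow> w $ k = 0" by simp
    have "u = unit_vec n 0"
    proof (rule eq_vecI)
      fix k assume "k < dim_vec (unit_vec n 0)"
      hence k: "k < n" by simp
      show "u $ k = unit_vec n 0 $ k" using w0[OF k] wi[OF k] k by (auto split: if_splits)
    qed (use u in auto)
    thus ?thesis using \<open>w \<bullet> w = 0\<close> w by (intro eq_vecI) auto
  next
    case False
    hence "2 * (w \<bullet> unit_vec n 0) / (w \<bullet> w) = 1" unfolding we ww by (simp add: field_simps)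
    thus ?thesis using u w by (intro eq_vecI) (auto simp: w_def)
  qed
  finally show ?thesis unfolding w_def .
qed


lemma sq_mult_carrier[simp]: "A \<in> carrier_mat n n \<Longrightarrow> B \<in> carrier_mat n n \<Longrightarrow> A * B \<in> carrier_mat n n"
  by auto

lemma diagm_dim[simp]: "dim_row (diagm n L) = n" "dim_col (diagm n L) = n"
  by (auto simp: diagm_def)

theorem spectral:
  fixes G :: "real mat"
  assumes "G \<in> carrier_mat n n" "transpose_mat G = G"
    "char_poly G = prod_list (map (\<lambda>l. [:- l, 1:]) Lam)"
  shows "\<exists>U \<in> carrier_mat n n. transpose_mat U * U = 1\<^sub>m n \<and> transpose_mat U * G * U = diagm n Lam"
  using assms
proof (induct Lam arbitrary: n G)
  case Nil
  hence n: "n = 0" using length_eigen[of G n "[] :: real list"] by simp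
  show ?case
    by (rule bexI[of _ "1\<^sub>m 0"], insert Nil n, auto intro!: eq_matI)
next
  case (Cons e es n G)
  note G = Cons(2) and sym = Cons(3) and cp = Cons(4)
  have len: "length (e # es) = n" by (rule length_eigen[OF G cp])
  define n' where "n' = length es"
  have n: "n = Suc n'" using len n'_def by simp
  have "poly (char_poly G) e = 0" unfolding cp by simp
  hence "eigenvalue G e" using eigenvalue_root_char_poly[OF G] by simp
  then obtain v where ev: "eigenvector G v e" unfolding eigenvalue_def by blast
  hence v: "v \<in> carrier_vec n" and vnz: "v \<noteq> 0\<^sub>v n" and Gv: "G *\<^sub>v v = e \<cdot>\<^sub>v v"
    using G unfolding eigenvector_def by auto
  define u where "u = (1 / sqrt (v \<bullet> v)) \<cdot>\<^sub>v v"
  have vv: "v \<bullet> v > 0" by (rule sprod_self_pos[OF v vnz])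
  have u: "u \<in> carrier_vec n" using v by (simp add: u_def)
  have uu: "u \<bullet> u = 1" using v vv unfolding u_def
    by (simp add: field_simps)
  have Gu: "G *\<^sub>v u = e \<cdot>\<^sub>v u" unfolding u_def using G v Gv
    by (simp add: mult_mat_vec smult_smult_assoc mult.commute)
  define H where "H = refl_mat n (unit_vec n 0 - u)"
  have H: "H \<in> carrier_mat n n" by (simp add: H_def)
  have HH: "H * H = 1\<^sub>m n" unfolding H_def by (rule refl_mat_square, use u in simp)
  have Ht: "transpose_mat H = H" by (simp add: H_def)
  have He: "H *\<^sub>v unit_vec n 0 = u" unfolding H_def by (rule householder_col0[OF u uu], simp add: n)
  define Gt where "Gt = H * G * H"
  have Gt: "Gt \<in> carrier_mat n n" using H G by (simp add: Gt_def)
  have Gt_sym: "transpose_mat Gt = Gt"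
  proof -
    have "transpose_mat Gt = transpose_mat H * transpose_mat (H * G)"
      unfolding Gt_def using H G by (intro transpose_mult[of _ n n]) auto
    also have "transpose_mat (H * G) = transpose_mat G * transpose_mat H"
      using H G by (intro transpose_mult[of _ n n]) auto
    finally show ?thesis using sym Ht H G unfolding Gt_def by simp
  qed
  have Gte: "Gt *\<^sub>v unit_vec n 0 = e \<cdot>\<^sub>v unit_vec n 0"
  proof -
    have "Gt *\<^sub>v unit_vec n 0 = H *\<^sub>v (G *\<^sub>v (H *\<^sub>v unit_vec n 0))"
      unfolding Gt_def using H G
        assoc_mult_mat_vec[of "H * G" n n H n "unit_vec n 0"]
        assoc_mult_mat_vec[of H n n G n "H *\<^sub>v unit_vec n 0"]
      by (simp del: assoc_mult_mat_vec assoc_mult_mat)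
    also have "\<dots> = e \<cdot>\<^sub>v (H *\<^sub>v u)" unfolding He Gu using H u by (simp add: mult_mat_vec)
    also have "H *\<^sub>v u = unit_vec n 0"
    proof -
      have "H *\<^sub>v u = (H * H) *\<^sub>v unit_vec n 0" unfolding He[symmetric]
        using assoc_mult_mat_vec[of H n n H n "unit_vec n 0"] H by simp
      thus ?thesis unfolding HH by simp
    qed
    finally show ?thesis .
  qed
  define D1 where "D1 = mat 1 1 (\<lambda>(i,j). if i = j then e else 0)"
  define G1 where "G1 = mat n' n' (\<lambda>(i,j). Gt $$ (i+1, j+1))"
  have G1: "G1 \<in> carrier_mat n' n'" by (simp add: G1_def)
  have D1: "D1 \<in> carrier_mat 1 1" by (simp add: D1_def)
  have Gt_blk: "Gt = blk D1 G1"
    unfolding D1_def G1_def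
  proof (rule blk_decomp[of Gt 1 n' "\<lambda>_. e"])
    show "Gt \<in> carrier_mat (1 + n') (1 + n')" using Gt n by simp
    show "transpose_mat Gt = Gt" by (rule Gt_sym)
    fix i j :: nat assume i: "i < 1" and j: "j < 1 + n'"
    have "Gt $$ (j, i) = (Gt *\<^sub>v unit_vec n 0) $ j" using i j Gt n by simp
    also have "\<dots> = (if j = i then e else 0)" unfolding Gte using i j n by simp
    finally show "Gt $$ (j, i) = (if j = i then e else 0)" .
  qed
  have GHGH: "G = H * Gt * H"
  proof -
    have c: "H * G \<in> carrier_mat n n" "G * H \<in> carrier_mat n n" "H * (G * H) \<in> carrier_mat n n"
      "H * H \<in> carrier_mat n n" "G * (H * H) \<in> carrier_mat n n"
      using H G by auto
    have "H * Gt * H = (H * H) * G * (H * H)" unfolding Gt_def using H G c by (simp add: assoc_mult_mat[of _ n n _ n _ n])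
    also have "\<dots> = G" unfolding HH using G by simp
    finally show ?thesis by simp
  qed
  have "char_poly G = char_poly Gt"
  proof (rule char_poly_similar)
    show "similar_mat G Gt"
      by (rule similar_matI[of G Gt H H n], insert G Gt H HH GHGH, auto)
  qed
  also have "\<dots> = char_poly D1 * char_poly G1" unfolding Gt_blk by (rule char_poly_blk[OF D1 G1])
  also have "char_poly D1 = [:- e, 1:]"
  proof -
    have "D1 = diagm 1 [e]" by (auto simp: D1_def diagm_def intro!: eq_matI)
    thus ?thesis using char_poly_diagm[of "[e]" 1] by simp
  qed
  finally have "[:- e, 1:] * char_poly G1 = [:- e, 1:] * prod_list (map (\<lambda>l. [:- l, 1:]) es)"
    using cp by simp
  moreover have ne: "[:- e, 1:] \<noteq> (0::real poly)" by simp
  ultimately have cp1: "char_poly G1 = prod_list (map (\<lambda>l. [:- l, 1:]) es)"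
    using mult_left_cancel[OF ne] by blast
  have G1_sym: "transpose_mat G1 = G1"
  proof (rule eq_matI)
    fix i j assume "i < dim_row G1" "j < dim_col G1"
    hence i: "i < n'" and j: "j < n'" by (auto simp: G1_def)
    have "Gt $$ (j+1, i+1) = Gt $$ (i+1, j+1)"
      using arg_cong[OF Gt_sym, of "\<lambda>X. X $$ (i+1,j+1)"] Gt i j n by simp
    thus "transpose_mat G1 $$ (i, j) = G1 $$ (i, j)" using i j by (simp add: G1_def)
  qed (auto simp: G1_def)
  from Cons(1)[OF G1 G1_sym cp1] obtain U1 where U1: "U1 \<in> carrier_mat n' n'"
    and U1o: "transpose_mat U1 * U1 = 1\<^sub>m n'" and U1d: "transpose_mat U1 * G1 * U1 = diagm n' es" by blast
  define B where "B = blk (1\<^sub>m 1) U1"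
  have B: "B \<in> carrier_mat n n" using blk_carrier[of "1\<^sub>m 1" 1 U1 n'] U1 n by (simp add: B_def)
  have Bt: "transpose_mat (blk (1\<^sub>m 1) U1) = blk (1\<^sub>m 1) (transpose_mat U1)"
    by (rule trans[OF blk_transpose[of _ 1 _ n']], use U1 in auto)
  define U where "U = H * B"
  have U: "U \<in> carrier_mat n n" using H B by (simp add: U_def)
  have Ut: "transpose_mat (H * B) = transpose_mat B * H"
    using H B Ht by (simp add: transpose_mult[of _ n n])
  have "transpose_mat U * U = transpose_mat B * (H * H) * B"
    unfolding U_def Ut using H B by (simp add: assoc_mult_mat[of _ n n _ n _ n])
  also have "\<dots> = blk (1\<^sub>m 1 * 1\<^sub>m 1) (transpose_mat U1 * U1)"
    unfolding HH B_def Bt using U1 n by (simp add: blk_mult[of _ 1 _ n'])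
  also have "\<dots> = 1\<^sub>m n" unfolding U1o using n by simp
  finally have Uo: "transpose_mat U * U = 1\<^sub>m n" .
  have "transpose_mat U * G * U = transpose_mat B * Gt * B"
    unfolding U_def Ut Gt_def using H B G by (simp add: assoc_mult_mat[of _ n n _ n _ n])
  also have "\<dots> = blk (1\<^sub>m 1 * D1 * 1\<^sub>m 1) (transpose_mat U1 * G1 * U1)"
    unfolding Gt_blk B_def Bt using U1 D1 G1 by (simp add: blk_mult[of _ 1 _ n'])
  also have "\<dots> = diagm n (e # es)"
    unfolding U1d using D1 n by (auto simp: D1_def diagm_def blk_def intro!: eq_matI)
  finally show ?case using U Uo by blast
qed


lemma Omega_carrier[simp]: "Omega S \<in> carrier_mat (2*S) (2*S)"
  by (simp add: Omega_def)

lemma Omega_dim[simp]: "dim_row (Omega S) = 2*S" "dim_col (Omega S) = 2*S"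
  by (auto simp: Omega_def)

lemma Omega_index:
  "i < 2*S \<Longrightarrow> j < 2*S \<Longrightarrow> Omega S $$ (i,j) =
    (if even i \<and> j = i + 1 then 1 else if odd i \<and> i = j + 1 then -1 else 0)"
  by (simp add: Omega_def)

lemma even_less_2S: "even (i::nat) \<Longrightarrow> i < 2*S \<Longrightarrow> i + 1 < 2*S"
  by presburger

lemma Omega_mult_vec:
  assumes x: "x \<in> carrier_vec (2*S)" and i: "i < 2*S"
  shows "(Omega S *\<^sub>v x) $ i = (if even i then x $ (i+1) else - x $ (i-1))"
proof -
  have "(Omega S *\<^sub>v x) $ i = (\<Sum>k = 0..<2*S. Omega S $$ (i,k) * x $ k)"
    using x i by (simp add: scalar_prod_def row_def)
  also have "\<dots> = (if even i then x $ (i+1) else - x $ (i-1))"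
  proof (cases "even i")
    case True
    have i1: "i + 1 < 2*S" using even_less_2S[OF True i] .
    have "(\<Sum>k = 0..<2*S. Omega S $$ (i,k) * x $ k) = (\<Sum>k = 0..<2*S. (if k = i+1 then 1 else 0) * x $ k)"
      by (rule sum.cong, auto simp: Omega_index i True)
    also have "\<dots> = x $ (i+1)" by (rule sum_delta2[OF i1])
    finally show ?thesis using True by simp
  next
    case False
    have i1: "i - 1 < 2*S" using i by simp
    have "(\<Sum>k = 0..<2*S. Omega S $$ (i,k) * x $ k) = (\<Sum>k = 0..<2*S. (if k = i-1 then 1 else 0) * (- x $ k))"
      by (rule sum.cong, insert False i, auto simp: Omega_index)
    also have "\<dots> = - x $ (i-1)" by (rule sum_delta2[OF i1])
    finally show ?thesis using False by simp
  qed
  finally show ?thesis .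
qed

lemma Omega_mult_left:
  assumes M: "M \<in> carrier_mat (2*S) m" and i: "i < 2*S" and j: "j < m"
  shows "(Omega S * M) $$ (i,j) = (if even i then M $$ (i+1,j) else - M $$ (i-1,j))"
proof -
  have "(Omega S * M) $$ (i,j) = (Omega S *\<^sub>v col M j) $ i"
    using M i j by simp
  also have "\<dots> = (if even i then col M j $ (i+1) else - col M j $ (i-1))"
    by (rule Omega_mult_vec, insert M j i, auto)
  also have "\<dots> = (if even i then M $$ (i+1,j) else - M $$ (i-1,j))"
    using M j i even_less_2S[of i S] by auto
  finally show ?thesis .
qed

lemma Omega_mult_right:
  assumes M: "M \<in> carrier_mat m (2*S)" and i: "i < m" and j: "j < 2*S"
  shows "(M * Omega S) $$ (i,j) = (if odd j then M $$ (i,j-1) else - M $$ (i,j+1))"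
proof -
  have "(M * Omega S) $$ (i,j) = (\<Sum>k = 0..<2*S. M $$ (i,k) * Omega S $$ (k,j))"
    using M i j by (simp add: scalar_prod_def row_def col_def)
  also have "\<dots> = (if odd j then M $$ (i,j-1) else - M $$ (i,j+1))"
  proof (cases "odd j")
    case True
    have j1: "j - 1 < 2*S" using j by simp
    have "(\<Sum>k = 0..<2*S. M $$ (i,k) * Omega S $$ (k,j)) = (\<Sum>k = 0..<2*S. (if k = j-1 then 1 else 0) * M $$ (i,k))"
      by (rule sum.cong, insert True j, auto simp: Omega_index)
    also have "\<dots> = M $$ (i,j-1)" by (rule sum_delta2[OF j1])
    finally show ?thesis using True by simp
  next
    case False
    have j1: "j + 1 < 2*S" using even_less_2S[of j S] False j by simp
    have "(\<Sum>k = 0..<2*S. M $$ (i,k) * Omega S $$ (k,j)) = (\<Sum>k = 0..<2*S. (if k = j+1 then 1 else 0) * (- M $$ (i,k)))"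
      by (rule sum.cong, insert False j, auto simp: Omega_index)
    also have "\<dots> = - M $$ (i,j+1)" by (rule sum_delta2[OF j1])
    finally show ?thesis using False by simp
  qed
  finally show ?thesis .
qed

lemma Omega_transpose: "transpose_mat (Omega S) = - Omega S"
  by (rule eq_matI, auto simp: Omega_index)

lemma Omega_square: "Omega S * Omega S = - 1\<^sub>m (2*S)"
proof (rule eq_matI)
  fix i j assume "i < dim_row (- 1\<^sub>m (2 * S))" "j < dim_col (- 1\<^sub>m (2 * S))"
  hence i: "i < 2*S" and j: "j < 2*S" by auto
  show "(Omega S * Omega S) $$ (i, j) = (- 1\<^sub>m (2 * S)) $$ (i, j)"
    using i j even_less_2S[of i S]
    by (subst Omega_mult_left[of _ S], auto simp: Omega_index)
qed auto

lemma Omega_orth: "transpose_mat (Omega S) * Omega S = 1\<^sub>m (2*S)"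
proof -
  have "transpose_mat (Omega S) * Omega S = - (Omega S * Omega S)"
    unfolding Omega_transpose by (rule uminus_mult_left_mat, auto)
  thus ?thesis unfolding Omega_square by simp
qed

lemma Omega_orth': "Omega S * transpose_mat (Omega S) = 1\<^sub>m (2*S)"
  using mat_mult_left_right_inverse[OF _ _ Omega_orth] by auto

lemma Omega_unit1:
  assumes "0 < S"
  shows "Omega S *\<^sub>v unit_vec (2*S) 1 = unit_vec (2*S) 0"
proof (rule eq_vecI)
  fix i assume "i < dim_vec (unit_vec (2*S) 0 :: real vec)"
  hence i: "i < 2*S" by simp
  show "(Omega S *\<^sub>v unit_vec (2*S) 1) $ i = unit_vec (2*S) 0 $ i"
  proof (cases "even i")
    case True
    thus ?thesis using i assms even_less_2S[of i S] by (subst Omega_mult_vec) (auto simp: unit_vec_def)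
  next
    case False
    hence "i \<noteq> 2" "i \<noteq> 0" by (auto, presburger)
    thus ?thesis using i assms False by (subst Omega_mult_vec) (auto simp: unit_vec_def)
  qed
qed (auto)

lemma Omega_unit0:
  assumes "0 < S"
  shows "Omega S *\<^sub>v unit_vec (2*S) 0 = - unit_vec (2*S) 1"
proof (rule eq_vecI)
  fix i assume "i < dim_vec (- unit_vec (2*S) 1 :: real vec)"
  hence i: "i < 2*S" by simp
  show "(Omega S *\<^sub>v unit_vec (2*S) 0) $ i = (- unit_vec (2*S) 1) $ i"
  proof (cases "even i")
    case True
    hence "i \<noteq> 1" by auto
    thus ?thesis using True i assms even_less_2S[of i S] by (subst Omega_mult_vec) (auto simp: unit_vec_def)
  next
    case False
    hence "i \<noteq> 0" by (rule contrapos_nn, simp)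
    thus ?thesis using i assms False by (subst Omega_mult_vec) (auto simp: unit_vec_def)
  qed
qed (auto)


abbreviation Om :: "nat \<Rightarrow> real vec \<Rightarrow> real vec" where "Om S x \<equiv> Omega S *\<^sub>v x"

lemma Om_carrier[simp]: "Om S x \<in> carrier_vec (2*S)" by (intro carrier_vecI) simp

lemmas assoc2 = assoc_mult_mat[of _ "2*S" "2*S" _ "2*S" _ "2*S" for S]
lemmas assoc2v = assoc_mult_mat_vec[of _ "2*S" "2*S" _ "2*S" for S]

lemma Om_Om: assumes x: "x \<in> carrier_vec (2*S)" shows "Om S (Om S x) = - x"
proof -
  have "Om S (Om S x) = (Omega S * Omega S) *\<^sub>v x"
    using x assoc_mult_mat_vec[of "Omega S" "2*S" "2*S" "Omega S" "2*S" x] by simp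
  also have "\<dots> = - x" unfolding Omega_square using x by auto
  finally show ?thesis .
qed

lemma Om_sprod: assumes x: "x \<in> carrier_vec (2*S)" and y: "y \<in> carrier_vec (2*S)"
  shows "Om S x \<bullet> Om S y = x \<bullet> y"
proof -
  have "(transpose_mat (Omega S) *\<^sub>v Om S x) \<bullet> y = Om S x \<bullet> Om S y"
    by (rule transpose_vec_mult_scalar[of _ "2*S" "2*S"], insert x y, auto)
  moreover have "transpose_mat (Omega S) *\<^sub>v Om S x = x"
  proof -
    have "transpose_mat (Omega S) *\<^sub>v Om S x = (transpose_mat (Omega S) * Omega S) *\<^sub>v x"
      using x by (simp add: assoc_mult_mat_vec[of _ "2*S" "2*S" _ "2*S"])
    thus ?thesis unfolding Omega_orth using x by simp
  qed
  ultimately show ?thesis by simp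
qed

lemma Om_antisym: assumes x: "x \<in> carrier_vec (2*S)" and y: "y \<in> carrier_vec (2*S)"
  shows "x \<bullet> Om S y = - (Om S x \<bullet> y)"
proof -
  have "(transpose_mat (Omega S) *\<^sub>v x) \<bullet> y = x \<bullet> Om S y"
    by (rule transpose_vec_mult_scalar[of _ "2*S" "2*S"], insert x y, auto)
  moreover have "transpose_mat (Omega S) *\<^sub>v x = - Om S x"
    unfolding Omega_transpose using x by simp
  ultimately show ?thesis using x y by simp
qed

lemma Om_self: assumes x: "x \<in> carrier_vec (2*S)" shows "x \<bullet> Om S x = 0"
proof -
  have "x \<bullet> Om S x = - (Om S x \<bullet> x)" by (rule Om_antisym[OF x x])
  also have "Om S x \<bullet> x = x \<bullet> Om S x" by (rule comm_scalar_prod[of _ "2*S"], insert x, auto)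
  finally show ?thesis by simp
qed

lemma SpO_I:
  assumes W: "W \<in> carrier_mat (2*S) (2*S)" and o: "transpose_mat W * W = 1\<^sub>m (2*S)"
    and c: "W * Omega S = Omega S * W"
  shows "W \<in> SpO S"
proof -
  have "transpose_mat W * Omega S * W = transpose_mat W * (W * Omega S)"
    using W by (simp add: c assoc_mult_mat[of _ "2*S" "2*S" _ "2*S" _ "2*S"])
  also have "\<dots> = (transpose_mat W * W) * Omega S" using W by (simp add: assoc_mult_mat[of _ "2*S" "2*S" _ "2*S" _ "2*S"])
  also have "\<dots> = Omega S" unfolding o by simp
  finally show ?thesis using W o
    unfolding SpO_def symplectic_mat_def orthogonal_real_mat_def by auto
qed

lemma SpO_D:
  assumes "W \<in> SpO S"
  shows "W \<in> carrier_mat (2*S) (2*S)" "transpose_mat W * W = 1\<^sub>m (2*S)"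
    "W * transpose_mat W = 1\<^sub>m (2*S)" "W * Omega S = Omega S * W"
proof -
  show W: "W \<in> carrier_mat (2*S) (2*S)" and o: "transpose_mat W * W = 1\<^sub>m (2*S)"
    using assms unfolding SpO_def orthogonal_real_mat_def by auto
  show o': "W * transpose_mat W = 1\<^sub>m (2*S)"
    by (rule mat_mult_left_right_inverse[OF _ _ o], insert W, auto)
  have s: "transpose_mat W * Omega S * W = Omega S"
    using assms unfolding SpO_def symplectic_mat_def by auto
  have "W * Omega S = W * (transpose_mat W * Omega S * W)" unfolding s ..
  also have "\<dots> = (W * transpose_mat W) * Omega S * W" using W
    by (simp add: assoc_mult_mat[of _ "2*S" "2*S" _ "2*S" _ "2*S"])
  also have "\<dots> = Omega S * W" unfolding o' using W by simp
  finally show "W * Omega S = Omega S * W" .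
qed

lemma SpO_mult:
  assumes A: "A \<in> SpO S" and B: "B \<in> SpO S"
  shows "A * B \<in> SpO S"
proof -
  note a = SpO_D[OF A] and b = SpO_D[OF B]
  have AB: "A * B \<in> carrier_mat (2*S) (2*S)" using a b by simp
  have "transpose_mat (A * B) = transpose_mat B * transpose_mat A"
    using a b by (intro transpose_mult[of _ "2*S" "2*S"]) auto
  hence "transpose_mat (A * B) * (A * B) = transpose_mat B * ((transpose_mat A * A) * B)"
    using a(1) b(1) by (simp add: assoc_mult_mat[of _ "2*S" "2*S" _ "2*S" _ "2*S"])
  also have "\<dots> = 1\<^sub>m (2*S)" using a b by simp
  finally have o: "transpose_mat (A * B) * (A * B) = 1\<^sub>m (2*S)" .
  have "A * B * Omega S = A * (B * Omega S)" using a(1) b(1) by (simp add: assoc_mult_mat[of _ "2*S" "2*S" _ "2*S" _ "2*S"])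
  also have "\<dots> = A * (Omega S * B)" unfolding b(4) ..
  also have "\<dots> = (A * Omega S) * B" using a(1) b(1) by (simp add: assoc_mult_mat[of _ "2*S" "2*S" _ "2*S" _ "2*S"])
  also have "\<dots> = (Omega S * A) * B" unfolding a(4) ..
  also have "\<dots> = Omega S * (A * B)" using a(1) b(1) by (simp add: assoc_mult_mat[of _ "2*S" "2*S" _ "2*S" _ "2*S"])
  finally show ?thesis by (rule SpO_I[OF AB o])
qed

lemma SpO_transpose:
  assumes A: "A \<in> SpO S"
  shows "transpose_mat A \<in> SpO S"
proof -
  note a = SpO_D[OF A]
  have At: "transpose_mat A \<in> carrier_mat (2*S) (2*S)" using a by simp
  have o: "transpose_mat (transpose_mat A) * transpose_mat A = 1\<^sub>m (2*S)" using a by simp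
  have "Omega S * transpose_mat A = (transpose_mat A * A) * Omega S * transpose_mat A"
    unfolding a(2) using a(1) by simp
  also have "\<dots> = transpose_mat A * (A * Omega S) * transpose_mat A" using a(1) At by (simp add: assoc_mult_mat[of _ "2*S" "2*S" _ "2*S" _ "2*S"])
  also have "\<dots> = transpose_mat A * (Omega S * A) * transpose_mat A" unfolding a(4) ..
  also have "\<dots> = transpose_mat A * Omega S * (A * transpose_mat A)" using a(1) At by (simp add: assoc_mult_mat[of _ "2*S" "2*S" _ "2*S" _ "2*S"])
  also have "\<dots> = transpose_mat A * Omega S" unfolding a(3) using a(1) by simp
  finally have "transpose_mat A * Omega S = Omega S * transpose_mat A" by simp
  thus ?thesis by (rule SpO_I[OF At o])
qed

lemma SpO_one: "1\<^sub>m (2*S) \<in> SpO S"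
  by (rule SpO_I, auto)

lemma Omega_Suc: "Omega (Suc S) = blk (Omega 1) (Omega S)"
  by (rule eq_matI, auto simp: blk_def Omega_index)

lemma SpO_blk:
  assumes A: "A \<in> SpO 1" and B: "B \<in> SpO S"
  shows "blk A B \<in> SpO (Suc S)"
proof -
  note a = SpO_D[OF A] and b = SpO_D[OF B]
  have A2: "A \<in> carrier_mat 2 2" using a by simp
  have C: "blk A B \<in> carrier_mat (2 * Suc S) (2 * Suc S)" using blk_carrier[OF A2 b(1)] by simp
  have "transpose_mat (blk A B) * blk A B = blk (transpose_mat A * A) (transpose_mat B * B)"
    using A2 b by (simp add: blk_transpose[OF A2 b(1)] blk_mult[of _ 2 _ "2*S"])
  also have "\<dots> = 1\<^sub>m (2 * Suc S)" using a b by simp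
  finally have o: "transpose_mat (blk A B) * blk A B = 1\<^sub>m (2 * Suc S)" .
  have O1: "Omega 1 \<in> carrier_mat 2 2" using Omega_carrier[of 1] by simp
  have "blk A B * Omega (Suc S) = blk (A * Omega 1) (B * Omega S)"
    unfolding Omega_Suc using A2 b O1 by (simp add: blk_mult[of _ 2 _ "2*S"])
  also have "\<dots> = blk (Omega 1 * A) (Omega S * B)" using a b by simp
  also have "\<dots> = Omega (Suc S) * blk A B"
    unfolding Omega_Suc using A2 b O1 by (simp add: blk_mult[of _ 2 _ "2*S"])
  finally show ?thesis by (rule SpO_I[OF C o])
qed


lemma sprod_expand:
  fixes x y :: "real vec"
  assumes "x \<in> carrier_vec n" "y \<in> carrier_vec n"
  shows "(x - y) \<bullet> (x - y) = x \<bullet> x - 2 * (x \<bullet> y) + y \<bullet> y"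
    "(x - y) \<bullet> x = x \<bullet> x - x \<bullet> y"
proof -
  have c: "y \<bullet> x = x \<bullet> y" by (rule comm_scalar_prod[of _ n], insert assms, auto)
  show "(x - y) \<bullet> (x - y) = x \<bullet> x - 2 * (x \<bullet> y) + y \<bullet> y"
    using assms c by (simp add: minus_scalar_prod_distrib[of _ n] scalar_prod_minus_distrib[of _ n])
  show "(x - y) \<bullet> x = x \<bullet> x - x \<bullet> y"
    using assms c by (simp add: minus_scalar_prod_distrib[of _ n])
qed

lemma refl_map:
  fixes x y :: "real vec"
  assumes x: "x \<in> carrier_vec n" and y: "y \<in> carrier_vec n" and xx: "x \<bullet> x = 1" and yy: "y \<bullet> y = 1"
  shows "refl_mat n (x - y) *\<^sub>v x = y"
proof -
  define v where "v = x - y"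
  have v: "v \<in> carrier_vec n" using x y by (simp add: v_def)
  have vv: "v \<bullet> v = 2 - 2 * (x \<bullet> y)" unfolding v_def using sprod_expand[OF x y] xx yy by simp
  have vx: "v \<bullet> x = 1 - x \<bullet> y" unfolding v_def using sprod_expand[OF x y] xx by simp
  have "refl_mat n v *\<^sub>v x = x - (2 * (v \<bullet> x) / (v \<bullet> v)) \<cdot>\<^sub>v v" by (rule refl_mat_vec[OF v x])
  also have "\<dots> = y"
  proof (cases "x \<bullet> y = 1")
    case True
    hence "v \<bullet> v = 0" using vv by simp
    hence v0: "v = 0\<^sub>v n" by (rule sprod_self_zero[OF v])
    have "y = x"
    proof (rule eq_vecI)
      fix i assume "i < dim_vec x" hence i: "i < n" using x by simp
      have "v $ i = 0" using v0 i by simp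
      thus "y $ i = x $ i" using i x y unfolding v_def by simp
    qed (use x y in auto)
    thus ?thesis using \<open>v \<bullet> v = 0\<close> x v by (intro eq_vecI) auto
  next
    case False
    hence "2 * (v \<bullet> x) / (v \<bullet> v) = 1" unfolding vx vv by (simp add: field_simps)
    thus ?thesis using x y v by (intro eq_vecI) (auto simp: v_def)
  qed
  finally show ?thesis unfolding v_def .
qed

lemma refl_mat_uminus: assumes v: "v \<in> carrier_vec n" shows "refl_mat n (- v) = refl_mat n v"
proof -
  have "(- v) \<bullet> (- v) = v \<bullet> v"
    unfolding scalar_prod_def by simp
  thus ?thesis unfolding refl_mat_def using v by (intro eq_matI) auto
qed

lemma refl_mult_index:
  assumes v: "v \<in> carrier_vec n" and w: "w \<in> carrier_vec n" and i: "i < n" and j: "j < n"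
  shows "(refl_mat n v * refl_mat n w) $$ (i,j) =
    (if i = j then 1 else 0) - 2 * v$i * v$j / (v \<bullet> v) - 2 * w$i * w$j / (w \<bullet> w)
    + (4 * v$i * w$j / ((v \<bullet> v) * (w \<bullet> w))) * (v \<bullet> w)"
proof -
  define a where "a = v \<bullet> v"
  define b where "b = w \<bullet> w"
  have vw: "v \<bullet> w = (\<Sum>k = 0..<n. v$k * w$k)" using w by (simp add: scalar_prod_def)
  have "(refl_mat n v * refl_mat n w) $$ (i,j) =
     (\<Sum>k = 0..<n. ((if i = k then 1 else 0) - 2 * v$i * v$k / a) * ((if k = j then 1 else 0) - 2 * w$k * w$j / b))"
    using i j by (simp add: refl_mat_def scalar_prod_def a_def b_def row_def col_def)
  also have "\<dots> = (\<Sum>k = 0..<n. (if i = k then 1 else 0) * (if k = j then 1 else 0))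
     - (\<Sum>k = 0..<n. (if i = k then 1 else 0) * (2 * w$k * w$j / b))
     - (\<Sum>k = 0..<n. (if k = j then 1 else 0) * (2 * v$i * v$k / a))
     + (4 * v$i * w$j / (a*b)) * (\<Sum>k = 0..<n. v$k * w$k)"
    by (simp add: sum_subtractf sum.distrib sum_distrib_left sum_divide_distrib algebra_simps)
  also have "\<dots> = (if i = j then 1 else 0) - 2 * w$i * w$j / b - 2 * v$i * v$j / a + (4 * v$i * w$j / (a*b)) * (v \<bullet> w)"
  proof -
    have a: "(\<Sum>k = 0..<n. (if i = k then 1 else 0) * (if k = j then 1 else 0)) = (if i = j then 1 else (0::real))"
      using sum_delta1[OF i, of "\<lambda>k. if k = j then 1 else 0"] by simp
    have b: "(\<Sum>k = 0..<n. (if i = k then 1 else 0) * (2 * w$k * w$j / b)) = 2 * w$i * w$j / b"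
      using sum_delta1[OF i, of "\<lambda>k. 2 * w$k * w$j / b"] by simp
    have c: "(\<Sum>k = 0..<n. (if k = j then 1 else 0) * (2 * v$i * v$k / a)) = 2 * v$i * v$j / a"
      using sum_delta2[OF j, of "\<lambda>k. 2 * v$i * v$k / a"] by simp
    show ?thesis unfolding a b c vw[symmetric] by simp
  qed
  finally show ?thesis unfolding a_def b_def by simp
qed

lemma refl_comm:
  assumes v: "v \<in> carrier_vec n" and w: "w \<in> carrier_vec n" and vw: "v \<bullet> w = 0"
  shows "refl_mat n v * refl_mat n w = refl_mat n w * refl_mat n v"
proof -
  have wv: "w \<bullet> v = 0" using vw comm_scalar_prod[OF v w] by simp
  show ?thesis
  proof (rule eq_matI)
    fix i j assume "i < dim_row (refl_mat n w * refl_mat n v)" "j < dim_col (refl_mat n w * refl_mat n v)"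
    hence i: "i < n" and j: "j < n" by auto
    show "(refl_mat n v * refl_mat n w) $$ (i, j) = (refl_mat n w * refl_mat n v) $$ (i, j)"
      unfolding refl_mult_index[OF v w i j] refl_mult_index[OF w v i j] vw wv by simp
  qed auto
qed

lemma refl_Omega:
  assumes v: "v \<in> carrier_vec (2*S)"
  shows "Omega S * refl_mat (2*S) v = refl_mat (2*S) (Om S v) * Omega S"
proof (rule eq_matI)
  fix i j assume "i < dim_row (refl_mat (2*S) (Om S v) * Omega S)" "j < dim_col (refl_mat (2*S) (Om S v) * Omega S)"
  hence i: "i < 2*S" and j: "j < 2*S" by auto
  define w where "w = Om S v"
  have ww: "w \<bullet> w = v \<bullet> v" unfolding w_def by (rule Om_sprod[OF v v])
  define c where "c = v \<bullet> v"
  have wi: "\<And>k. k < 2*S \<Longrightarrow> w $ k = (if even k then v $ (k+1) else - v $ (k-1))"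
    unfolding w_def by (rule Omega_mult_vec[OF v])
  have R: "\<And>k l. k < 2*S \<Longrightarrow> l < 2*S \<Longrightarrow> refl_mat (2*S) v $$ (k,l) = (if k = l then 1 else 0) - 2 * v$k * v$l / c"
    by (simp add: refl_mat_def c_def)
  have R': "\<And>k l. k < 2*S \<Longrightarrow> l < 2*S \<Longrightarrow> refl_mat (2*S) w $$ (k,l) = (if k = l then 1 else 0) - 2 * w$k * w$l / c"
    by (simp add: refl_mat_def c_def ww)
  have L: "(Omega S * refl_mat (2*S) v) $$ (i,j) = (if even i then refl_mat (2*S) v $$ (i+1,j) else - refl_mat (2*S) v $$ (i-1,j))"
    by (rule Omega_mult_left[OF _ i j], simp)
  have Rr: "(refl_mat (2*S) w * Omega S) $$ (i,j) = (if odd j then refl_mat (2*S) w $$ (i,j-1) else - refl_mat (2*S) w $$ (i,j+1))"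
    by (rule Omega_mult_right[OF _ i j], simp)
  show "(Omega S * refl_mat (2*S) v) $$ (i,j) = (refl_mat (2*S) (Om S v) * Omega S) $$ (i,j)"
    unfolding w_def[symmetric] L Rr
  proof (cases "even i"; cases "even j")
    assume ei: "even i" and ej: "even j"
    have i1: "i + 1 < 2*S" and j1: "j + 1 < 2*S" using even_less_2S ei ej i j by auto
    have o1: "odd (j+1)" using ej by simp
    have "i + 1 \<noteq> j" "i \<noteq> j + 1" using ei ej by presburger+
    thus "(if even i then refl_mat (2*S) v $$ (i+1,j) else - refl_mat (2*S) v $$ (i-1,j)) =
      (if odd j then refl_mat (2*S) w $$ (i,j-1) else - refl_mat (2*S) w $$ (i,j+1))"
      using ei ej i1 j1 i j o1 by (simp add: R R' wi)
  next
    assume ei: "even i" and ej: "\<not> even j"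
    have i1: "i + 1 < 2*S" using even_less_2S ei i by auto
    have j1: "j - 1 < 2*S" using j by simp
    have j2: "even (j - 1)" using ej by presburger
    have j3: "j - 1 + 1 = j" using ej by presburger
    have "(i + 1 = j) = (i = j - 1)" using ej by presburger
    thus "(if even i then refl_mat (2*S) v $$ (i+1,j) else - refl_mat (2*S) v $$ (i-1,j)) =
      (if odd j then refl_mat (2*S) w $$ (i,j-1) else - refl_mat (2*S) w $$ (i,j+1))"
      using ei ej i1 j1 j2 j3 i j by (simp add: R R' wi)
  next
    assume ei: "\<not> even i" and ej: "even j"
    have i1: "i - 1 < 2*S" using i by simp
    have i2: "even (i - 1)" using ei by presburger
    have i3: "i - 1 + 1 = i" using ei by presburger
    have j1: "j + 1 < 2*S" using even_less_2S ej j by auto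
    have j2: "odd (j+1)" using ej by simp
    have "(i - 1 = j) = (i = j + 1)" using ei by presburger
    thus "(if even i then refl_mat (2*S) v $$ (i+1,j) else - refl_mat (2*S) v $$ (i-1,j)) =
      (if odd j then refl_mat (2*S) w $$ (i,j-1) else - refl_mat (2*S) w $$ (i,j+1))"
      using ei ej i1 i2 i3 j1 j2 i j by (simp add: R R' wi)
  next
    assume ei: "\<not> even i" and ej: "\<not> even j"
    have i1: "i - 1 < 2*S" using i by simp
    have i2: "even (i - 1)" using ei by presburger
    have i3: "i - 1 + 1 = i" using ei by presburger
    have j1: "j - 1 < 2*S" using j by simp
    have j2: "even (j - 1)" using ej by presburger
    have j3: "j - 1 + 1 = j" using ej by presburger
    have "i - 1 \<noteq> j" "i \<noteq> j - 1" using ei ej by presburger+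
    thus "(if even i then refl_mat (2*S) v $$ (i+1,j) else - refl_mat (2*S) v $$ (i-1,j)) =
      (if odd j then refl_mat (2*S) w $$ (i,j-1) else - refl_mat (2*S) w $$ (i,j+1))"
      using ei ej i1 i2 i3 j1 j2 j3 i j by (simp add: R R' wi)
  qed
qed auto


definition cH :: "nat \<Rightarrow> real vec \<Rightarrow> real mat" where
  "cH S v = refl_mat (2*S) v * refl_mat (2*S) (Om S v)"

lemma cH_SpO:
  assumes v: "v \<in> carrier_vec (2*S)"
  shows "cH S v \<in> SpO S"
proof -
  define rv where "rv = refl_mat (2*S) v"
  define rw where "rw = refl_mat (2*S) (Om S v)"
  have c: "rv \<in> carrier_mat (2*S) (2*S)" "rw \<in> carrier_mat (2*S) (2*S)" "Omega S \<in> carrier_mat (2*S) (2*S)"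
    by (auto simp: rv_def rw_def)
  note as = assoc_mult_mat[of _ "2*S" "2*S" _ "2*S" _ "2*S"]
  have C: "cH S v \<in> carrier_mat (2*S) (2*S)" by (simp add: cH_def)
  have rvv: "rv * rv = 1\<^sub>m (2*S)" unfolding rv_def by (rule refl_mat_square[OF v])
  have rww: "rw * rw = 1\<^sub>m (2*S)" unfolding rw_def by (rule refl_mat_square, simp)
  have comm: "rv * rw = rw * rv" unfolding rv_def rw_def
    by (rule refl_comm[OF v], simp, rule Om_self[OF v])
  have "transpose_mat (rv * rw) = transpose_mat rw * transpose_mat rv"
    using c by (intro transpose_mult[of _ "2*S" "2*S"]) auto
  also have "\<dots> = rw * rv" by (simp add: rv_def rw_def)
  finally have t: "transpose_mat (rv * rw) = rw * rv" .
  have "transpose_mat (rv * rw) * (rv * rw) = rw * (rv * rv) * rw" unfolding t using c by (simp add: as)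
  also have "\<dots> = 1\<^sub>m (2*S)" unfolding rvv using c rww by simp
  finally have o: "transpose_mat (cH S v) * cH S v = 1\<^sub>m (2*S)" unfolding cH_def rv_def rw_def .
  have O1: "Omega S * rv = rw * Omega S" unfolding rv_def rw_def by (rule refl_Omega[OF v])
  have O2: "Omega S * rw = rv * Omega S"
  proof -
    have "Omega S * rw = refl_mat (2*S) (Om S (Om S v)) * Omega S" unfolding rw_def by (rule refl_Omega, simp)
    also have "refl_mat (2*S) (Om S (Om S v)) = rv" unfolding Om_Om[OF v] rv_def by (rule refl_mat_uminus[OF v])
    finally show ?thesis .
  qed
  have "Omega S * (rv * rw) = (Omega S * rv) * rw" using c by (simp add: as)
  also have "\<dots> = rw * (Omega S * rw)" unfolding O1 using c by (simp add: as)
  also have "\<dots> = (rw * rv) * Omega S" unfolding O2 using c by (simp add: as)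
  finally have "cH S v * Omega S = Omega S * cH S v" unfolding cH_def rv_def[symmetric] rw_def[symmetric] comm
    using c by (simp add: as)
  thus ?thesis by (rule SpO_I[OF C o])
qed

lemma cH_vec:
  assumes v: "v \<in> carrier_vec (2*S)" and x: "x \<in> carrier_vec (2*S)"
  shows "cH S v *\<^sub>v x = refl_mat (2*S) v *\<^sub>v (refl_mat (2*S) (Om S v) *\<^sub>v x)"
  unfolding cH_def using x by (simp add: assoc_mult_mat_vec[of _ "2*S" "2*S" _ "2*S"])

definition rot :: "real \<Rightarrow> real \<Rightarrow> real mat" where
  "rot c s = mat 2 2 (\<lambda>(i,j). if i = 0 \<and> j = 0 then c else if i = 0 \<and> j = 1 then s
      else if i = 1 \<and> j = 0 then - s else c)"

lemma sum2: "(\<Sum>k = 0..<2. f k) = f (0::nat) + (f 1 :: real)"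
  by (simp add: numeral_2_eq_2)

lemma less2: "(i::nat) < 2 \<longleftrightarrow> i = 0 \<or> i = 1" by auto

lemma rot_SpO:
  assumes cs: "c^2 + s^2 = 1"
  shows "rot c s \<in> SpO 1"
proof (rule SpO_I)
  show "rot c s \<in> carrier_mat (2*1) (2*1)" by (simp add: rot_def)
  show "transpose_mat (rot c s) * rot c s = 1\<^sub>m (2*1)"
    by (rule eq_matI, auto simp: rot_def scalar_prod_def sum2 less2 row_def col_def,
        insert cs, auto simp: power2_eq_square algebra_simps)
  show "rot c s * Omega 1 = Omega 1 * rot c s"
    by (rule eq_matI, auto simp: rot_def scalar_prod_def sum2 less2 row_def col_def Omega_index)
qed

lemma sprod_first2:
  fixes x y :: "real vec"
  assumes x: "x \<in> carrier_vec n" and y: "y \<in> carrier_vec n" and n: "2 \<le> n"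
    and z: "\<And>i. 2 \<le> i \<Longrightarrow> i < n \<Longrightarrow> y $ i = 0"
  shows "x \<bullet> y = x$0 * y$0 + x$1 * y$1"
proof -
  have "x \<bullet> y = (\<Sum>i\<in>{0..<n}. x$i * y$i)" using y by (simp add: scalar_prod_def)
  also have "{0..<n} = {0..<2} \<union> {2..<n}" using n by auto
  also have "(\<Sum>i\<in>{0..<2} \<union> {2..<n}. x$i * y$i) = (\<Sum>i\<in>{0..<2}. x$i * y$i) + (\<Sum>i\<in>{2..<n}. x$i * y$i)"
    by (rule sum.union_disjoint) auto
  also have "(\<Sum>i\<in>{2..<n}. x$i * y$i) = 0" using z by simp
  finally show ?thesis by (simp add: sum2)
qed

lemma mult_unit_vec_index:
  fixes A :: "real mat"
  assumes A: "A \<in> carrier_mat m n" and j: "j < n" and i: "i < m"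
  shows "(A *\<^sub>v unit_vec n j) $ i = A $$ (i,j)"
proof -
  have "(A *\<^sub>v unit_vec n j) $ i = row A i \<bullet> unit_vec n j" using A i by simp
  also have "\<dots> = row A i $ j" by (rule scalar_prod_right_unit, insert A i j, auto)
  also have "\<dots> = A $$ (i,j)" using A i j by simp
  finally show ?thesis .
qed

lemma exists_SpO_col1:
  assumes S: "S \<ge> 1" and a: "a \<in> carrier_vec (2*S)" and aa: "a \<bullet> a = 1"
  shows "\<exists>W \<in> SpO S. W *\<^sub>v unit_vec (2*S) 1 = a"
proof -
  obtain S0 where S0: "S = Suc S0" using S by (cases S) auto
  define r where "r = sqrt ((a$0)^2 + (a$1)^2)"
  define c where "c = (if r = 0 then 1 else a$1 / r)"
  define s where "s = (if r = 0 then 0 else a$0 / r)"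
  have rr: "r^2 = (a$0)^2 + (a$1)^2" unfolding r_def by simp
  have cs: "c^2 + s^2 = 1"
  proof (cases "r = 0")
    case False
    have nz: "(a$0)^2 + (a$1)^2 \<noteq> 0" using False rr by auto
    have "c^2 + s^2 = ((a$1)^2 + (a$0)^2) / r^2"
      unfolding c_def s_def using False by (simp add: power_divide add_divide_distrib)
    also have "\<dots> = 1" using rr nz by simp
    finally show ?thesis .
  qed (simp add: c_def s_def)
  have acs: "a$0 * c - a$1 * s = 0"
  proof (cases "r = 0")
    case True
    hence "(a$0)^2 + (a$1)^2 = 0" using rr by simp
    hence "a$0 = 0" "a$1 = 0" by (simp_all add: sum_power2_eq_zero_iff)
    thus ?thesis by simp
  next
    case False
    thus ?thesis unfolding c_def s_def by (simp add: field_simps)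
  qed
  define R where "R = blk (rot c s) (1\<^sub>m (2*S0))"
  have R: "R \<in> SpO S" unfolding R_def S0 by (rule SpO_blk[OF rot_SpO[OF cs] SpO_one])
  have Rc: "R \<in> carrier_mat (2*S) (2*S)" using SpO_D(1)[OF R] .
  define x0 where "x0 = vec (2*S) (\<lambda>i. if i = 0 then s else if i = 1 then c else 0)"
  have x0: "x0 \<in> carrier_vec (2*S)" by (simp add: x0_def)
  have n2: "2 \<le> 2*S" and n1: "1 < 2*S" using S by auto
  have Rx: "R *\<^sub>v unit_vec (2*S) 1 = x0"
  proof (rule eq_vecI)
    fix i assume "i < dim_vec x0" hence i: "i < 2*S" by (simp add: x0_def)
    have "(R *\<^sub>v unit_vec (2*S) 1) $ i = R $$ (i,1)" by (rule mult_unit_vec_index[OF Rc n1 i])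
    also have "\<dots> = x0 $ i" using i S0 by (auto simp: R_def blk_def x0_def rot_def)
    finally show "(R *\<^sub>v unit_vec (2*S) 1) $ i = x0 $ i" .
  qed (use Rc x0 in auto)
  have x0x0: "x0 \<bullet> x0 = 1"
    by (subst sprod_first2[OF x0 x0 n2], auto simp: x0_def, insert cs n1, auto simp: power2_eq_square)
  have Ox0: "Om S x0 = vec (2*S) (\<lambda>i. if i = 0 then c else if i = 1 then - s else 0)"
  proof (rule eq_vecI)
    fix i assume "i < dim_vec (vec (2*S) (\<lambda>i. if i = 0 then c else if i = 1 then - s else 0))"
    hence i: "i < 2*S" by simp
    show "Om S x0 $ i = vec (2*S) (\<lambda>i. if i = 0 then c else if i = 1 then - s else 0) $ i"
    proof -
      have "\<not> (odd i \<and> i - 1 = 1)" by presburger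
      thus ?thesis using i even_less_2S[of i S] n1 by (subst Omega_mult_vec[OF x0 i], auto simp: x0_def)
    qed
  qed simp
  have ax0: "a \<bullet> Om S x0 = 0"
    by (subst sprod_first2[OF a _ n2], auto simp: Ox0, insert acs n1, auto simp: algebra_simps)
  define v where "v = x0 - a"
  have v: "v \<in> carrier_vec (2*S)" using x0 a by (simp add: v_def)
  have vOx: "v \<bullet> Om S x0 = 0"
    unfolding v_def using Om_self[OF x0] ax0 x0 a by (simp add: minus_scalar_prod_distrib[of _ "2*S"])
  have wx: "Om S v \<bullet> x0 = 0" using Om_antisym[OF v x0] vOx by simp
  have rwx: "refl_mat (2*S) (Om S v) *\<^sub>v x0 = x0"
  proof -
    have "refl_mat (2*S) (Om S v) *\<^sub>v x0 = x0 - (2 * (Om S v \<bullet> x0) / (Om S v \<bullet> Om S v)) \<cdot>\<^sub>v Om S v"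
      by (rule refl_mat_vec[OF _ x0], simp)
    also have "\<dots> = x0" unfolding wx using x0 by (intro eq_vecI) auto
    finally show ?thesis .
  qed
  define W where "W = cH S v * R"
  have W: "W \<in> SpO S" unfolding W_def by (rule SpO_mult[OF cH_SpO[OF v] R])
  have "W *\<^sub>v unit_vec (2*S) 1 = cH S v *\<^sub>v (R *\<^sub>v unit_vec (2*S) 1)"
    unfolding W_def using Rc SpO_D(1)[OF cH_SpO[OF v]]
    by (simp add: assoc_mult_mat_vec[of _ "2*S" "2*S" _ "2*S"])
  also have "\<dots> = refl_mat (2*S) v *\<^sub>v x0" unfolding Rx cH_vec[OF v x0] rwx ..
  also have "\<dots> = a" unfolding v_def by (rule refl_map[OF x0 a x0x0 aa])
  finally show ?thesis using W by blast
qed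


definition QC :: "nat \<Rightarrow> real mat \<Rightarrow> bool" where
  "QC S G \<longleftrightarrow> G \<in> carrier_mat (2*S) (2*S) \<and> transpose_mat G = G \<and>
    (\<forall>x \<in> carrier_vec (2*S). x \<noteq> 0\<^sub>v (2*S) \<longrightarrow> x \<bullet> (G *\<^sub>v x) > 0) \<and>
    (\<forall>x \<in> carrier_vec (2*S). (x \<bullet> (G *\<^sub>v x)) * (Om S x \<bullet> (G *\<^sub>v Om S x)) \<ge> (x \<bullet> x)^2)"

lemma bilin_sum:
  fixes G :: "real mat"
  assumes G: "G \<in> carrier_mat n n" and a: "a \<in> carrier_vec n" and b: "b \<in> carrier_vec n"
  shows "a \<bullet> (G *\<^sub>v b) = (\<Sum>i<n. \<Sum>j<n. a$i * G$$(i,j) * b$j)"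
proof -
  have "a \<bullet> (G *\<^sub>v b) = (\<Sum>i<n. a$i * (\<Sum>j<n. G$$(i,j) * b$j))"
    using G a b by (simp add: scalar_prod_def row_def atLeast0LessThan)
  also have "\<dots> = (\<Sum>i<n. \<Sum>j<n. a$i * G$$(i,j) * b$j)"
    by (simp add: sum_distrib_left mult.assoc)
  finally show ?thesis .
qed

lemma re_form:
  fixes G P :: "real mat" and a b :: "real vec"
  assumes G: "G \<in> carrier_mat n n" and P: "P \<in> carrier_mat n n"
    and a: "a \<in> carrier_vec n" and b: "b \<in> carrier_vec n"
  defines "M \<equiv> map_mat complex_of_real G + \<i> \<cdot>\<^sub>m map_mat complex_of_real P"
  defines "z \<equiv> vec n (\<lambda>i. complex_of_real (a$i) + \<i> * complex_of_real (b$i))"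
  shows "Re (\<Sum>i<n. \<Sum>j<n. cnj (z $ i) * M $$ (i,j) * z $ j) =
     a \<bullet> (G *\<^sub>v a) + b \<bullet> (G *\<^sub>v b) - a \<bullet> (P *\<^sub>v b) + b \<bullet> (P *\<^sub>v a)"
proof -
  have t: "\<And>i j. i < n \<Longrightarrow> j < n \<Longrightarrow> Re (cnj (z $ i) * M $$ (i,j) * z $ j) =
     a$i * G$$(i,j) * a$j + b$i * G$$(i,j) * b$j - a$i * P$$(i,j) * b$j + b$i * P$$(i,j) * a$j"
    using G P unfolding M_def z_def by (simp add: algebra_simps)
  have "Re (\<Sum>i<n. \<Sum>j<n. cnj (z $ i) * M $$ (i,j) * z $ j) =
     (\<Sum>i<n. \<Sum>j<n. Re (cnj (z $ i) * M $$ (i,j) * z $ j))" by (simp only: Re_sum)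
  also have "\<dots> = (\<Sum>i<n. \<Sum>j<n. a$i * G$$(i,j) * a$j + b$i * G$$(i,j) * b$j - a$i * P$$(i,j) * b$j + b$i * P$$(i,j) * a$j)"
    by (intro sum.cong refl, rule t) auto
  also have "\<dots> = (\<Sum>i<n. \<Sum>j<n. a$i * G$$(i,j) * a$j) + (\<Sum>i<n. \<Sum>j<n. b$i * G$$(i,j) * b$j)
     - (\<Sum>i<n. \<Sum>j<n. a$i * P$$(i,j) * b$j) + (\<Sum>i<n. \<Sum>j<n. b$i * P$$(i,j) * a$j)"
    by (simp add: sum.distrib sum_subtractf)
  also have "\<dots> = a \<bullet> (G *\<^sub>v a) + b \<bullet> (G *\<^sub>v b) - a \<bullet> (P *\<^sub>v b) + b \<bullet> (P *\<^sub>v a)"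
    using bilin_sum[OF G a a] bilin_sum[OF G b b] bilin_sum[OF P a b] bilin_sum[OF P b a] by simp
  finally show ?thesis .
qed

lemma quantum_CM_QC:
  assumes Q: "quantum_CM S G"
  shows "QC S G"
proof -
  let ?n = "2*S"
  have G: "G \<in> carrier_mat ?n ?n" and sym: "transpose_mat G = G"
    and pos: "\<forall>x \<in> carrier_vec ?n. x \<noteq> 0\<^sub>v ?n \<longrightarrow> x \<bullet> (G *\<^sub>v x) > 0"
    and psd: "hermitian_psd ?n (map_mat complex_of_real G + \<i> \<cdot>\<^sub>m map_mat complex_of_real (Omega S))"
    using Q unfolding quantum_CM_def by auto
  have key: "a \<bullet> (G *\<^sub>v a) + b \<bullet> (G *\<^sub>v b) - a \<bullet> (Om S b) + b \<bullet> (Om S a) \<ge> 0"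
    if a: "a \<in> carrier_vec ?n" and b: "b \<in> carrier_vec ?n" for a b
  proof -
    define z where "z = vec ?n (\<lambda>i. complex_of_real (a$i) + \<i> * complex_of_real (b$i))"
    have "z \<in> carrier_vec ?n" by (simp add: z_def)
    hence "Re (\<Sum>i<?n. \<Sum>j<?n. cnj (z $ i) * (map_mat complex_of_real G + \<i> \<cdot>\<^sub>m map_mat complex_of_real (Omega S)) $$ (i,j) * z $ j) \<ge> 0"
      using psd unfolding hermitian_psd_def Let_def by blast
    thus ?thesis unfolding z_def re_form[OF G Omega_carrier a b] .
  qed
  have ineq: "(x \<bullet> (G *\<^sub>v x)) * (Om S x \<bullet> (G *\<^sub>v Om S x)) \<ge> (x \<bullet> x)^2" if x: "x \<in> carrier_vec ?n" for x
  proof (cases "x = 0\<^sub>v ?n")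
    case True
    thus ?thesis using G by simp
  next
    case False
    define A where "A = x \<bullet> (G *\<^sub>v x)"
    define B where "B = Om S x \<bullet> (G *\<^sub>v Om S x)"
    define c where "c = x \<bullet> x"
    have A: "A > 0" using pos x False by (simp add: A_def)
    have Ox: "Om S x \<in> carrier_vec ?n" by simp
    have "Om S x \<noteq> 0\<^sub>v ?n"
    proof
      assume "Om S x = 0\<^sub>v ?n"
      hence "Om S (Om S x) = Om S (0\<^sub>v ?n)" by simp
      also have "Om S (0\<^sub>v ?n) = 0\<^sub>v ?n" using Omega_carrier[of S] by (intro eq_vecI) auto
      finally have "Om S (Om S x) = 0\<^sub>v ?n" .
      hence "- x = 0\<^sub>v ?n" using Om_Om[OF x] by simp
      hence "x = 0\<^sub>v ?n" using x by (metis uminus_uminus_vec uminus_zero_vec_eq)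
      with False show False by simp
    qed
    hence B: "B > 0" using pos Ox by (simp add: B_def)
    define t where "t = - c / B"
    define b where "b = t \<cdot>\<^sub>v Om S x"
    have b: "b \<in> carrier_vec ?n" by (simp add: b_def)
    have "0 \<le> x \<bullet> (G *\<^sub>v x) + b \<bullet> (G *\<^sub>v b) - x \<bullet> (Om S b) + b \<bullet> (Om S x)" by (rule key[OF x b])
    also have "b \<bullet> (G *\<^sub>v b) = t * t * B" unfolding b_def B_def using G Ox
      by (simp add: mult_mat_vec[of _ ?n ?n] scalar_prod_smult_distrib[of _ ?n] smult_scalar_prod_distrib[of _ ?n])
    also have "x \<bullet> (Om S b) = - t * c"
    proof -
      have "Om S b = t \<cdot>\<^sub>v Om S (Om S x)" unfolding b_def using Ox by (simp add: mult_mat_vec[of _ ?n ?n])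
      also have "\<dots> = t \<cdot>\<^sub>v (- x)" unfolding Om_Om[OF x] ..
      finally show ?thesis using x unfolding c_def
        by (simp add: scalar_prod_smult_distrib[of _ ?n] scalar_prod_uminus_right)
    qed
    also have "b \<bullet> (Om S x) = t * c"
      unfolding b_def c_def using Ox x by (simp add: Om_sprod[OF x x])
    finally have "0 \<le> A + t * t * B + 2 * t * c" unfolding A_def by (simp add: algebra_simps)
    also have "A + t * t * B + 2 * t * c = A - c * c / B" unfolding t_def using B
      by (simp add: field_simps power2_eq_square)
    finally have "c * c / B \<le> A" by simp
    hence "c * c \<le> A * B" using B by (simp add: field_simps)
    thus ?thesis unfolding A_def B_def c_def by (simp add: power2_eq_square)
  qed
  show ?thesis unfolding QC_def using G sym pos ineq by blast
qed


locale spec =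
  fixes n :: nat and G U :: "real mat" and Lam :: "real list"
  assumes G: "G \<in> carrier_mat n n" and U: "U \<in> carrier_mat n n"
    and Uo: "transpose_mat U * U = 1\<^sub>m n" and UD: "transpose_mat U * G * U = diagm n Lam"
    and len: "length Lam = n"
begin

abbreviation D where "D \<equiv> diagm n Lam"

lemma Ut: "transpose_mat U \<in> carrier_mat n n" using U by simp

lemma Uo': "U * transpose_mat U = 1\<^sub>m n"
  by (rule mat_mult_left_right_inverse[OF Ut U Uo])

lemma G_eq: "G = U * D * transpose_mat U"
proof -
  have "U * D * transpose_mat U = (U * transpose_mat U) * G * (U * transpose_mat U)"
    unfolding UD[symmetric] using G U Ut by (simp add: assoc_mult_mat[of _ n n _ n _ n])
  also have "\<dots> = G" unfolding Uo' using G by simp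
  finally show ?thesis by simp
qed

definition co :: "real vec \<Rightarrow> real vec" where "co x = transpose_mat U *\<^sub>v x"

lemma co_dim[simp]: "dim_vec (co x) = n" unfolding co_def using Ut by simp

lemma D_vec_carrier[simp]: "D *\<^sub>v c \<in> carrier_vec n" by (intro carrier_vecI) simp

lemma co_carrier[simp]: "co x \<in> carrier_vec n" unfolding co_def using Ut by (intro carrier_vecI) simp

lemma U_co: assumes x: "x \<in> carrier_vec n" shows "U *\<^sub>v co x = x"
proof -
  have "U *\<^sub>v co x = (U * transpose_mat U) *\<^sub>v x" unfolding co_def using U Ut x
    by (simp add: assoc_mult_mat_vec[of _ n n _ n])
  thus ?thesis unfolding Uo' using x by simp
qed

lemma co_U: assumes c: "c \<in> carrier_vec n" shows "co (U *\<^sub>v c) = c"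
proof -
  have "co (U *\<^sub>v c) = (transpose_mat U * U) *\<^sub>v c" unfolding co_def using U Ut c
    by (simp add: assoc_mult_mat_vec[of _ n n _ n])
  thus ?thesis unfolding Uo using c by simp
qed

lemma sprod_U: assumes c: "c \<in> carrier_vec n" and d: "d \<in> carrier_vec n"
  shows "(U *\<^sub>v c) \<bullet> (U *\<^sub>v d) = c \<bullet> d"
proof -
  have "(transpose_mat U *\<^sub>v (U *\<^sub>v c)) \<bullet> d = (U *\<^sub>v c) \<bullet> (U *\<^sub>v d)"
    by (rule transpose_vec_mult_scalar[OF U d], insert U c, simp)
  moreover have "transpose_mat U *\<^sub>v (U *\<^sub>v c) = c" using co_U[OF c] unfolding co_def .
  ultimately show ?thesis by simp
qed

lemma D_vec: assumes c: "c \<in> carrier_vec n" shows "D *\<^sub>v c = vec n (\<lambda>i. Lam ! i * c $ i)"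
proof (rule eq_vecI)
  fix i assume "i < dim_vec (vec n (\<lambda>i. Lam ! i * c $ i))"
  hence i: "i < n" by simp
  have "(D *\<^sub>v c) $ i = (\<Sum>k = 0..<n. (if i = k then Lam ! i else 0) * c $ k)"
    using i c by (simp add: diagm_def scalar_prod_def row_def)
  also have "\<dots> = (\<Sum>k = 0..<n. (if i = k then 1 else 0) * (Lam ! i * c $ k))"
    by (rule sum.cong, auto)
  also have "\<dots> = Lam ! i * c $ i" by (rule sum_delta1[OF i])
  finally show "(D *\<^sub>v c) $ i = vec n (\<lambda>i. Lam ! i * c $ i) $ i" using i by simp
qed simp

lemma G_vec: assumes x: "x \<in> carrier_vec n" shows "G *\<^sub>v x = U *\<^sub>v (D *\<^sub>v co x)"
proof -
  have "G *\<^sub>v x = ((U * D) * transpose_mat U) *\<^sub>v x" using G_eq by simp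
  also have "\<dots> = U *\<^sub>v (D *\<^sub>v co x)" unfolding co_def using U Ut x
    by (simp add: assoc_mult_mat_vec[of _ n n _ n] assoc_mult_mat[of _ n n _ n _ n])
  finally show ?thesis .
qed

lemma norm_co: assumes x: "x \<in> carrier_vec n" shows "x \<bullet> x = co x \<bullet> co x"
  using sprod_U[OF co_carrier co_carrier, of x x] U_co[OF x] by simp

lemma quad_co: assumes x: "x \<in> carrier_vec n"
  shows "x \<bullet> (G *\<^sub>v x) = (\<Sum>i = 0..<n. Lam ! i * (co x $ i * co x $ i))"
proof -
  have "x \<bullet> (G *\<^sub>v x) = (U *\<^sub>v co x) \<bullet> (U *\<^sub>v (D *\<^sub>v co x))" unfolding G_vec[OF x] U_co[OF x] ..
  also have "\<dots> = co x \<bullet> (D *\<^sub>v co x)" by (rule sprod_U, auto)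
  also have "\<dots> = (\<Sum>i = 0..<n. Lam ! i * (co x $ i * co x $ i))"
    unfolding D_vec[OF co_carrier] by (simp add: scalar_prod_def algebra_simps)
  finally show ?thesis .
qed

lemma norm_co_sum: assumes x: "x \<in> carrier_vec n" shows "x \<bullet> x = (\<Sum>i = 0..<n. co x $ i * co x $ i)"
  unfolding norm_co[OF x] by (simp add: scalar_prod_def)

lemma eigen_co:
  assumes x: "x \<in> carrier_vec n" and supp: "\<And>i. i < n \<Longrightarrow> co x $ i \<noteq> 0 \<Longrightarrow> Lam ! i = \<mu>"
  shows "G *\<^sub>v x = \<mu> \<cdot>\<^sub>v x"
proof -
  have "D *\<^sub>v co x = \<mu> \<cdot>\<^sub>v co x"
    unfolding D_vec[OF co_carrier]
  proof (rule eq_vecI)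
    fix i assume "i < dim_vec (\<mu> \<cdot>\<^sub>v co x)"
    hence i: "i < n" by simp
    show "vec n (\<lambda>i. Lam ! i * co x $ i) $ i = (\<mu> \<cdot>\<^sub>v co x) $ i"
    proof (cases "co x $ i = 0")
      case False thus ?thesis using supp[OF i False] i by simp
    qed (use i in simp)
  qed simp
  hence "G *\<^sub>v x = U *\<^sub>v (\<mu> \<cdot>\<^sub>v co x)" unfolding G_vec[OF x] by simp
  also have "\<dots> = \<mu> \<cdot>\<^sub>v (U *\<^sub>v co x)" using U by (simp add: mult_mat_vec[of _ n n])
  finally show ?thesis unfolding U_co[OF x] .
qed

lemma rayleigh_upper:
  assumes sorted: "sorted_wrt (\<ge>) Lam" and k: "k < n" and x: "x \<in> carrier_vec n"
    and z: "\<And>i. i < k \<Longrightarrow> co x $ i = 0"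
  shows "x \<bullet> (G *\<^sub>v x) \<le> Lam ! k * (x \<bullet> x)"
    "x \<bullet> (G *\<^sub>v x) = Lam ! k * (x \<bullet> x) \<Longrightarrow> G *\<^sub>v x = Lam ! k \<cdot>\<^sub>v x"
proof -
  let ?c = "co x"
  have le: "Lam ! i \<le> Lam ! k" if "k \<le> i" "i < n" for i
  proof (cases "i = k")
    case False
    hence "k < i" using that by simp
    thus ?thesis using sorted that len by (auto simp: sorted_wrt_iff_nth_less)
  qed simp
  have trm: "0 \<le> (Lam ! k - Lam ! i) * (?c $ i * ?c $ i)" if "i < n" for i
  proof (cases "i < k")
    case True thus ?thesis using z by simp
  next
    case False show ?thesis by (rule mult_nonneg_nonneg) (use False le[of i] that in auto)
  qed
  have diff: "Lam ! k * (x \<bullet> x) - x \<bullet> (G *\<^sub>v x) = (\<Sum>i = 0..<n. (Lam ! k - Lam ! i) * (?c $ i * ?c $ i))"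
    unfolding quad_co[OF x] norm_co_sum[OF x] by (simp add: sum_distrib_left sum_subtractf algebra_simps)
  have "0 \<le> (\<Sum>i = 0..<n. (Lam ! k - Lam ! i) * (?c $ i * ?c $ i))"
    by (rule sum_nonneg, insert trm, auto)
  thus "x \<bullet> (G *\<^sub>v x) \<le> Lam ! k * (x \<bullet> x)" using diff by simp
  assume eq: "x \<bullet> (G *\<^sub>v x) = Lam ! k * (x \<bullet> x)"
  hence "(\<Sum>i = 0..<n. (Lam ! k - Lam ! i) * (?c $ i * ?c $ i)) = 0" using diff by simp
  hence each: "\<And>i. i \<in> {0..<n} \<Longrightarrow> (Lam ! k - Lam ! i) * (?c $ i * ?c $ i) = 0"
    using sum_nonneg_eq_0_iff[of "{0..<n}" "\<lambda>i. (Lam ! k - Lam ! i) * (?c $ i * ?c $ i)"] trm by auto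
  show "G *\<^sub>v x = Lam ! k \<cdot>\<^sub>v x"
  proof (rule eigen_co[OF x])
    fix i assume i: "i < n" and nz: "?c $ i \<noteq> 0"
    have "?c $ i * ?c $ i \<noteq> 0" using nz by simp
    thus "Lam ! i = Lam ! k" using each[of i] i by simp
  qed
qed

end


lemma squeeze:
  fixes A B p q :: real
  assumes A: "A > 0" "A \<le> p" and B: "B > 0" "B \<le> q" and pq: "p * q = 1" and AB: "A * B \<ge> 1"
  shows "A = p" "B = q"
proof -
  have p: "p > 0" using A by simp
  have q: "q > 0" using B by simp
  have "A * B \<le> p * B" using A B by (simp add: mult_right_mono)
  also have "p * B \<le> p * q" using p B by (simp add: mult_left_mono)
  finally have "A * B \<le> 1" using pq by simp
  hence e: "A * B = 1" "p * B = 1" using AB \<open>A * B \<le> p * B\<close> \<open>p * B \<le> p * q\<close> pq by linarith+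
  from e(2) pq have "p * B = p * q" by simp
  thus "B = q" using p by simp
  from e have "A * B = p * B" by simp
  thus "A = p" using B by simp
qed

context spec
begin

lemma co_index:
  assumes y: "y \<in> carrier_vec n" and i: "i < n"
  shows "co y $ i = (U *\<^sub>v unit_vec n i) \<bullet> y"
proof -
  have "(transpose_mat U *\<^sub>v y) \<bullet> unit_vec n i = y \<bullet> (U *\<^sub>v unit_vec n i)"
    by (rule transpose_vec_mult_scalar[OF U], insert y, auto)
  moreover have "(transpose_mat U *\<^sub>v y) \<bullet> unit_vec n i = co y $ i"
    unfolding co_def by (rule scalar_prod_right_unit[OF i])
  moreover have "y \<bullet> (U *\<^sub>v unit_vec n i) = (U *\<^sub>v unit_vec n i) \<bullet> y"
    by (rule comm_scalar_prod[of _ n], insert y U, auto)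
  ultimately show ?thesis by simp
qed

lemma basis_vec:
  assumes i: "i < n"
  shows "U *\<^sub>v unit_vec n i \<in> carrier_vec n" "co (U *\<^sub>v unit_vec n i) = unit_vec n i"
    "(U *\<^sub>v unit_vec n i) \<bullet> (U *\<^sub>v unit_vec n i) = 1"
    "G *\<^sub>v (U *\<^sub>v unit_vec n i) = Lam ! i \<cdot>\<^sub>v (U *\<^sub>v unit_vec n i)"
proof -
  show c: "U *\<^sub>v unit_vec n i \<in> carrier_vec n" using U by (intro carrier_vecI) simp
  show co: "co (U *\<^sub>v unit_vec n i) = unit_vec n i" by (rule co_U, simp)
  show "(U *\<^sub>v unit_vec n i) \<bullet> (U *\<^sub>v unit_vec n i) = 1" using sprod_U[of "unit_vec n i" "unit_vec n i"] i by simp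
  show "G *\<^sub>v (U *\<^sub>v unit_vec n i) = Lam ! i \<cdot>\<^sub>v (U *\<^sub>v unit_vec n i)"
    by (rule eigen_co[OF c], unfold co, insert i, auto split: if_splits)
qed

lemma eig_pos:
  assumes pos: "\<And>x. x \<in> carrier_vec n \<Longrightarrow> x \<noteq> 0\<^sub>v n \<Longrightarrow> x \<bullet> (G *\<^sub>v x) > 0" and i: "i < n"
  shows "Lam ! i > 0"
proof -
  let ?u = "U *\<^sub>v unit_vec n i"
  note b = basis_vec[OF i]
  have "?u \<noteq> 0\<^sub>v n" using b(3) b(1) by auto
  hence "?u \<bullet> (G *\<^sub>v ?u) > 0" using pos b(1) by simp
  also have "?u \<bullet> (G *\<^sub>v ?u) = Lam ! i" unfolding b(4) using b(1) b(3) by simp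
  finally show ?thesis .
qed

end


lemma QC_pos: "QC S G \<Longrightarrow> x \<in> carrier_vec (2*S) \<Longrightarrow> x \<noteq> 0\<^sub>v (2*S) \<Longrightarrow> x \<bullet> (G *\<^sub>v x) > 0"
  unfolding QC_def by blast

lemma QC_ineq: "QC S G \<Longrightarrow> x \<in> carrier_vec (2*S) \<Longrightarrow> (x \<bullet> (G *\<^sub>v x)) * (Om S x \<bullet> (G *\<^sub>v Om S x)) \<ge> (x \<bullet> x)^2"
  unfolding QC_def by blast

lemma unit_nz: "(x :: real vec) \<in> carrier_vec n \<Longrightarrow> x \<bullet> x = 1 \<Longrightarrow> x \<noteq> 0\<^sub>v n"
  by auto

lemma pair_from_bounds:
  assumes sp: "spec (2*S) G U Lam" and Q: "QC S G" and sorted: "sorted_wrt (\<ge>) Lam"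
    and a: "a \<in> carrier_vec (2*S)" and aa: "a \<bullet> a = 1"
    and p: "p < 2*S" and q: "q < 2*S" and pq: "Lam ! p * Lam ! q = 1"
    and za: "\<And>i. i < q \<Longrightarrow> spec.co U a $ i = 0"
    and zo: "\<And>i. i < p \<Longrightarrow> spec.co U (Om S a) $ i = 0"
  shows "G *\<^sub>v a = Lam ! q \<cdot>\<^sub>v a" "G *\<^sub>v Om S a = Lam ! p \<cdot>\<^sub>v Om S a"
proof -
  interpret spec "2*S" G U Lam by (rule sp)
  let ?y = "Om S a"
  have y: "?y \<in> carrier_vec (2*S)" by simp
  have yy: "?y \<bullet> ?y = 1" using Om_sprod[OF a a] aa by simp
  have A: "a \<bullet> (G *\<^sub>v a) > 0" by (rule QC_pos[OF Q a unit_nz[OF a aa]])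
  have B: "?y \<bullet> (G *\<^sub>v ?y) > 0" by (rule QC_pos[OF Q y unit_nz[OF y yy]])
  have Ab: "a \<bullet> (G *\<^sub>v a) \<le> Lam ! q" using rayleigh_upper(1)[OF sorted q a za] aa by simp
  have Bb: "?y \<bullet> (G *\<^sub>v ?y) \<le> Lam ! p" using rayleigh_upper(1)[OF sorted p y zo] yy by simp
  have AB: "(a \<bullet> (G *\<^sub>v a)) * (?y \<bullet> (G *\<^sub>v ?y)) \<ge> 1" using QC_ineq[OF Q a] aa by simp
  have qp: "Lam ! q * Lam ! p = 1" using pq by (simp add: mult.commute)
  note s = squeeze[OF A Ab B Bb qp AB]
  have e1: "a \<bullet> (G *\<^sub>v a) = Lam ! q * (a \<bullet> a)" using s(1) aa by simp
  show "G *\<^sub>v a = Lam ! q \<cdot>\<^sub>v a" by (rule rayleigh_upper(2)[OF sorted q a za e1])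
  have e2: "?y \<bullet> (G *\<^sub>v ?y) = Lam ! p * (?y \<bullet> ?y)" unfolding yy using s(2) by simp
  show "G *\<^sub>v ?y = Lam ! p \<cdot>\<^sub>v ?y" by (rule rayleigh_upper(2)[OF sorted p y zo e2])
qed

lemma find_A:
  assumes sp: "spec (2*S) G U Lam" and Q: "QC S G" and sorted: "sorted_wrt (\<ge>) Lam"
    and S: "S \<ge> 1" and pure: "Lam ! 0 * Lam ! (2*S-1) = 1"
  shows "\<exists>a \<in> carrier_vec (2*S). a \<bullet> a = 1 \<and> G *\<^sub>v a = Lam ! (2*S-1) \<cdot>\<^sub>v a \<and> G *\<^sub>v Om S a = Lam ! 0 \<cdot>\<^sub>v Om S a"
proof -
  interpret spec "2*S" G U Lam by (rule sp)
  have q: "2*S-1 < 2*S" and p: "0 < 2*S" using S by auto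
  note b = basis_vec[OF q]
  let ?a = "U *\<^sub>v unit_vec (2*S) (2*S-1)"
  have za: "\<And>i. i < 2*S-1 \<Longrightarrow> co ?a $ i = 0" unfolding b(2) using q by simp
  note r = pair_from_bounds[OF sp Q sorted b(1) b(3) p q pure za]
  show ?thesis using b(1) b(3) r by blast
qed

lemma find_S1:
  assumes sp: "spec 2 G U Lam"
  shows "\<exists>a \<in> carrier_vec (2*1). a \<bullet> a = 1 \<and> G *\<^sub>v a = Lam ! 1 \<cdot>\<^sub>v a \<and> G *\<^sub>v Om 1 a = Lam ! 0 \<cdot>\<^sub>v Om 1 a"
proof -
  interpret spec 2 G U Lam by (rule sp)
  have one: "1 < (2::nat)" by simp
  note b = basis_vec[OF one]
  let ?a = "U *\<^sub>v unit_vec 2 1"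
  have a: "?a \<in> carrier_vec (2*1)" using b(1) by simp
  have y: "Om 1 ?a \<in> carrier_vec 2" using Om_carrier[of 1] by simp
  have "co (Om 1 ?a) $ 1 = ?a \<bullet> Om 1 ?a" by (rule co_index[OF y one])
  also have "\<dots> = 0" by (rule Om_self[OF a])
  finally have z: "co (Om 1 ?a) $ 1 = 0" .
  have "G *\<^sub>v Om 1 ?a = Lam ! 0 \<cdot>\<^sub>v Om 1 ?a"
  proof (rule eigen_co[OF y])
    fix i assume "i < 2" and "co (Om 1 ?a) $ i \<noteq> 0"
    hence "i = 0" using z by (cases i, auto simp: less_Suc_eq)
    thus "Lam ! i = Lam ! 0" by simp
  qed
  thus ?thesis using a b(3) b(4) by auto
qed


lemma find_B:
  assumes sp: "spec (2*S) G U Lam" and Q: "QC S G" and sorted: "sorted_wrt (\<ge>) Lam"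
    and S: "S \<ge> 2" and pure: "Lam ! 1 * Lam ! (2*S-2) = 1"
  shows "\<exists>a \<in> carrier_vec (2*S). a \<bullet> a = 1 \<and> G *\<^sub>v a = Lam ! (2*S-2) \<cdot>\<^sub>v a \<and> G *\<^sub>v Om S a = Lam ! 1 \<cdot>\<^sub>v Om S a"
proof -
  interpret spec "2*S" G U Lam by (rule sp)
  let ?n = "2*S"
  have i0: "0 < ?n" and i2: "?n - 2 < ?n" and i3: "?n - 1 < ?n" and i1: "1 < ?n" using S by auto
  have d23: "?n - 2 \<noteq> ?n - 1" and d02: "0 \<noteq> ?n - 2" using S by auto
  define e2 where "e2 = (unit_vec ?n (?n - 2) :: real vec)"
  define e3 where "e3 = (unit_vec ?n (?n - 1) :: real vec)"
  have e2: "e2 \<in> carrier_vec ?n" and e3: "e3 \<in> carrier_vec ?n" by (auto simp: e2_def e3_def)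
  define u0 where "u0 = U *\<^sub>v unit_vec ?n 0"
  define u2 where "u2 = U *\<^sub>v e2"
  define u3 where "u3 = U *\<^sub>v e3"
  have u0: "u0 \<in> carrier_vec ?n" and u2: "u2 \<in> carrier_vec ?n" and u3: "u3 \<in> carrier_vec ?n"
    unfolding u0_def u2_def u3_def using U by (auto intro!: carrier_vecI)
  define M1 where "M1 = u0 \<bullet> Om S u2"
  define M2 where "M2 = u0 \<bullet> Om S u3"
  define c1 where "c1 = (if M1 = 0 \<and> M2 = 0 then 1 else M2)"
  define c2 where "c2 = (if M1 = 0 \<and> M2 = 0 then 0 else - M1)"
  have cM: "c1 * M1 + c2 * M2 = 0" unfolding c1_def c2_def by auto
  have cpos: "c1 * c1 + c2 * c2 > 0"
  proof (cases "M1 = 0 \<and> M2 = 0")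
    case False
    hence "M2 \<noteq> 0 \<or> M1 \<noteq> 0" by auto
    hence "M2 * M2 > 0 \<or> M1 * M1 > 0" by (auto simp: zero_less_mult_iff linorder_neq_iff)
    hence h: "M2 * M2 + M1 * M1 > 0" by (metis add_nonneg_pos add_pos_nonneg zero_le_square)
    show ?thesis unfolding c1_def c2_def using False h by simp
  qed (simp add: c1_def c2_def)
  define cv where "cv = c1 \<cdot>\<^sub>v e2 + c2 \<cdot>\<^sub>v e3"
  have cv: "cv \<in> carrier_vec ?n" unfolding cv_def using e2 e3 by simp
  have cvi: "\<And>i. i < ?n - 2 \<Longrightarrow> cv $ i = 0" unfolding cv_def e2_def e3_def by auto
  have cvcv: "cv \<bullet> cv = c1 * c1 + c2 * c2"
  proof -
    have e22: "e2 \<bullet> e2 = 1" and e33: "e3 \<bullet> e3 = 1" and e23: "e2 \<bullet> e3 = 0" and e32: "e3 \<bullet> e2 = 0"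
      unfolding e2_def e3_def using i2 i3 d23 by auto
    show ?thesis unfolding cv_def using e2 e3 e22 e33 e23 e32
      by (simp add: add_scalar_prod_distrib[of _ ?n] scalar_prod_add_distrib[of _ ?n])
  qed
  define a0 where "a0 = U *\<^sub>v cv"
  have a0: "a0 \<in> carrier_vec ?n" unfolding a0_def using U by (intro carrier_vecI) simp
  have a0_eq: "a0 = c1 \<cdot>\<^sub>v u2 + c2 \<cdot>\<^sub>v u3"
    unfolding a0_def cv_def u2_def u3_def using U e2 e3
    by (simp add: mult_add_distrib_mat_vec[of _ ?n ?n] mult_mat_vec[of _ ?n ?n])
  have a0a0: "a0 \<bullet> a0 = c1 * c1 + c2 * c2" unfolding a0_def sprod_U[OF cv cv] cvcv ..
  define k where "k = 1 / sqrt (a0 \<bullet> a0)"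
  define a where "a = k \<cdot>\<^sub>v a0"
  have a: "a \<in> carrier_vec ?n" unfolding a_def using a0 by simp
  have pos0: "a0 \<bullet> a0 > 0" using a0a0 cpos by simp
  have "a \<bullet> a = k * k * (a0 \<bullet> a0)" unfolding a_def using a0 by simp
  also have "\<dots> = 1" unfolding k_def using pos0 by (simp add: field_simps)
  finally have aa: "a \<bullet> a = 1" .
  have coa: "co a = k \<cdot>\<^sub>v cv" unfolding a_def a0_def co_def using U Ut cv
    by (simp add: mult_mat_vec[of _ ?n ?n] assoc_mult_mat_vec[of _ ?n ?n _ ?n, symmetric] Uo)
  have za: "\<And>i. i < ?n - 2 \<Longrightarrow> co a $ i = 0" unfolding coa using cvi cv by simp
  have Oa: "Om S a = k \<cdot>\<^sub>v (c1 \<cdot>\<^sub>v Om S u2 + c2 \<cdot>\<^sub>v Om S u3)"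
    unfolding a_def a0_eq using u2 u3
    by (simp add: mult_add_distrib_mat_vec[of _ ?n ?n] mult_mat_vec[of _ ?n ?n])
  have "co (Om S a) $ 0 = u0 \<bullet> Om S a" unfolding u0_def by (rule co_index[OF _ i0], simp)
  also have "\<dots> = k * (c1 * M1 + c2 * M2)" unfolding Oa M1_def M2_def using u0
    by (simp add: scalar_prod_add_distrib[of _ ?n] )
  also have "\<dots> = 0" unfolding cM by simp
  finally have z0: "co (Om S a) $ 0 = 0" .
  have zo: "\<And>i. i < 1 \<Longrightarrow> co (Om S a) $ i = 0" using z0 by auto
  have pure': "Lam ! 1 * Lam ! (?n - 2) = 1" using pure .
  note r = pair_from_bounds[OF sp Q sorted a aa i1 i2 pure' za zo]
  show ?thesis using a aa r by blast
qed


lemma sprod_transpose_right: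
  fixes W :: "real mat"
  assumes W: "W \<in> carrier_mat n n" and x: "x \<in> carrier_vec n" and z: "z \<in> carrier_vec n"
  shows "x \<bullet> (transpose_mat W *\<^sub>v z) = (W *\<^sub>v x) \<bullet> z"
proof -
  have "(transpose_mat W *\<^sub>v z) \<bullet> x = z \<bullet> (W *\<^sub>v x)" by (rule transpose_vec_mult_scalar[OF W x z])
  moreover have "(transpose_mat W *\<^sub>v z) \<bullet> x = x \<bullet> (transpose_mat W *\<^sub>v z)"
    by (rule comm_scalar_prod[of _ n], insert W z x, auto)
  moreover have "z \<bullet> (W *\<^sub>v x) = (W *\<^sub>v x) \<bullet> z"
    by (rule comm_scalar_prod[of _ n], insert W z x, auto)
  ultimately show ?thesis by simp
qed

lemma QC_congr:
  assumes Q: "QC S G" and W: "W \<in> SpO S"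
  shows "QC S (transpose_mat W * G * W)"
proof -
  let ?n = "2*S"
  note w = SpO_D[OF W]
  have G: "G \<in> carrier_mat ?n ?n" and sym: "transpose_mat G = G" using Q unfolding QC_def by auto
  have Wt: "transpose_mat W \<in> carrier_mat ?n ?n" using w by simp
  let ?Gt = "transpose_mat W * G * W"
  have Gt: "?Gt \<in> carrier_mat ?n ?n" using w G by simp
  have Wx: "W *\<^sub>v x \<in> carrier_vec ?n" for x using w by (intro carrier_vecI) simp
  have quad: "x \<bullet> (?Gt *\<^sub>v x) = (W *\<^sub>v x) \<bullet> (G *\<^sub>v (W *\<^sub>v x))" if x: "x \<in> carrier_vec ?n" for x
  proof -
    have "?Gt *\<^sub>v x = transpose_mat W *\<^sub>v (G *\<^sub>v (W *\<^sub>v x))"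
      using w G x Wt by (simp add: assoc_mult_mat_vec[of _ ?n ?n _ ?n])
    moreover have "G *\<^sub>v (W *\<^sub>v x) \<in> carrier_vec ?n" using G by (intro carrier_vecI) simp
    ultimately show ?thesis using sprod_transpose_right[OF w(1) x, of "G *\<^sub>v (W *\<^sub>v x)"] by simp
  qed
  have norm: "(W *\<^sub>v x) \<bullet> (W *\<^sub>v x) = x \<bullet> x" if x: "x \<in> carrier_vec ?n" for x
  proof -
    have "(W *\<^sub>v x) \<bullet> (W *\<^sub>v x) = x \<bullet> (transpose_mat W *\<^sub>v (W *\<^sub>v x))"
      using sprod_transpose_right[OF w(1) x Wx] by simp
    also have "transpose_mat W *\<^sub>v (W *\<^sub>v x) = x"
      using w x Wt by (simp add: assoc_mult_mat_vec[of _ ?n ?n _ ?n, symmetric])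
    finally show ?thesis .
  qed
  have com: "Om S (W *\<^sub>v x) = W *\<^sub>v Om S x" if x: "x \<in> carrier_vec ?n" for x
    using w x by (simp add: assoc_mult_mat_vec[of _ ?n ?n _ ?n, symmetric])
  have sym': "transpose_mat ?Gt = ?Gt"
  proof -
    have "transpose_mat ?Gt = transpose_mat W * transpose_mat (transpose_mat W * G)"
      using w G Wt by (intro transpose_mult[of _ ?n ?n]) auto
    also have "transpose_mat (transpose_mat W * G) = transpose_mat G * transpose_mat (transpose_mat W)"
      using w G Wt by (intro transpose_mult[of _ ?n ?n]) auto
    finally show ?thesis using sym w G Wt by (simp add: assoc_mult_mat[of _ ?n ?n _ ?n _ ?n])
  qed
  have pos: "x \<bullet> (?Gt *\<^sub>v x) > 0" if x: "x \<in> carrier_vec ?n" and nz: "x \<noteq> 0\<^sub>v ?n" for x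
  proof -
    have "W *\<^sub>v x \<noteq> 0\<^sub>v ?n"
    proof
      assume "W *\<^sub>v x = 0\<^sub>v ?n"
      hence "x \<bullet> x = 0" using norm[OF x] by simp
      hence "x = 0\<^sub>v ?n" by (rule sprod_self_zero[OF x])
      with nz show False by simp
    qed
    thus ?thesis unfolding quad[OF x] using QC_pos[OF Q Wx] by simp
  qed
  have ineq: "(x \<bullet> (?Gt *\<^sub>v x)) * (Om S x \<bullet> (?Gt *\<^sub>v Om S x)) \<ge> (x \<bullet> x)^2" if x: "x \<in> carrier_vec ?n" for x
  proof -
    have "((W *\<^sub>v x) \<bullet> (G *\<^sub>v (W *\<^sub>v x))) * (Om S (W *\<^sub>v x) \<bullet> (G *\<^sub>v Om S (W *\<^sub>v x))) \<ge> ((W *\<^sub>v x) \<bullet> (W *\<^sub>v x))^2"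
      by (rule QC_ineq[OF Q Wx])
    thus ?thesis unfolding quad[OF x] quad[OF Om_carrier] com[OF x] norm[OF x] .
  qed
  show ?thesis unfolding QC_def using Gt sym' pos ineq by blast
qed

definition pad :: "real vec \<Rightarrow> real vec" where "pad y = 0\<^sub>v 2 @\<^sub>v y"

lemma pad_carrier[simp]: "y \<in> carrier_vec m \<Longrightarrow> pad y \<in> carrier_vec (2 + m)"
  unfolding pad_def by (rule append_carrier_vec) auto

lemma pad_sprod: "y \<in> carrier_vec m \<Longrightarrow> z \<in> carrier_vec m \<Longrightarrow> pad y \<bullet> pad z = y \<bullet> z"
  unfolding pad_def by (subst scalar_prod_append[of _ 2 _ m], auto)

lemma blk_pad:
  fixes A B :: "real mat"
  assumes A: "A \<in> carrier_mat 2 2" and B: "B \<in> carrier_mat m m" and y: "y \<in> carrier_vec m"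
  shows "blk A B *\<^sub>v pad y = pad (B *\<^sub>v y)"
proof -
  have "blk A B = four_block_mat A (0\<^sub>m 2 m) (0\<^sub>m m 2) B" using A B by (simp add: blk_def)
  hence "blk A B *\<^sub>v pad y = A *\<^sub>v 0\<^sub>v 2 @\<^sub>v B *\<^sub>v y"
    unfolding pad_def using mult_mat_vec_split[OF A B _ y] by simp
  moreover have "A *\<^sub>v 0\<^sub>v 2 = 0\<^sub>v 2" using A by (intro eq_vecI) auto
  ultimately show ?thesis unfolding pad_def by simp
qed

lemma pad_nz: assumes y: "y \<in> carrier_vec m" and nz: "y \<noteq> 0\<^sub>v m" shows "pad y \<noteq> 0\<^sub>v (2 + m)"
proof
  assume "pad y = 0\<^sub>v (2 + m)"
  hence "pad y \<bullet> pad y = 0" by simp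
  hence "y \<bullet> y = 0" using pad_sprod[OF y y] by simp
  hence "y = 0\<^sub>v m" by (rule sprod_self_zero[OF y])
  with nz show False by simp
qed

lemma QC_block:
  assumes Q: "QC (Suc S0) (blk D G1)" and D: "D \<in> carrier_mat 2 2" and G1: "G1 \<in> carrier_mat (2*S0) (2*S0)"
  shows "QC S0 G1"
proof -
  let ?m = "2*S0"
  have sym: "transpose_mat (blk D G1) = blk D G1" using Q unfolding QC_def by auto
  have sym1: "transpose_mat G1 = G1"
  proof (rule eq_matI)
    fix i j assume "i < dim_row G1" "j < dim_col G1"
    hence i: "i < ?m" and j: "j < ?m" using G1 by auto
    have "transpose_mat (blk D G1) $$ (i+2, j+2) = blk D G1 $$ (i+2, j+2)" using sym by simp
    thus "transpose_mat G1 $$ (i, j) = G1 $$ (i, j)" using i j D G1 by (simp add: blk_def)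
  qed (use G1 in auto)
  have O: "Omega (Suc S0) = blk (Omega 1) (Omega S0)" by (rule Omega_Suc)
  have O1: "Omega 1 \<in> carrier_mat 2 2" using Omega_carrier[of 1] by simp
  have Opad: "Om (Suc S0) (pad y) = pad (Om S0 y)" if y: "y \<in> carrier_vec ?m" for y
    unfolding O by (rule blk_pad[OF O1 _ y], simp)
  have Gpad: "blk D G1 *\<^sub>v pad y = pad (G1 *\<^sub>v y)" if y: "y \<in> carrier_vec ?m" for y
    by (rule blk_pad[OF D G1 y])
  have py: "pad y \<in> carrier_vec (2 * Suc S0)" if y: "y \<in> carrier_vec ?m" for y
    using pad_carrier[OF y] by simp
  have G1y: "G1 *\<^sub>v y \<in> carrier_vec ?m" for y using G1 by (intro carrier_vecI) simp
  have quad: "pad y \<bullet> (blk D G1 *\<^sub>v pad y) = y \<bullet> (G1 *\<^sub>v y)" if y: "y \<in> carrier_vec ?m" for y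
    unfolding Gpad[OF y] by (rule pad_sprod[OF y G1y])
  have pos: "y \<bullet> (G1 *\<^sub>v y) > 0" if y: "y \<in> carrier_vec ?m" and nz: "y \<noteq> 0\<^sub>v ?m" for y
  proof -
    have "pad y \<noteq> 0\<^sub>v (2 * Suc S0)" using pad_nz[OF y nz] by simp
    thus ?thesis using QC_pos[OF Q py[OF y]] quad[OF y] by simp
  qed
  have ineq: "(y \<bullet> (G1 *\<^sub>v y)) * (Om S0 y \<bullet> (G1 *\<^sub>v Om S0 y)) \<ge> (y \<bullet> y)^2" if y: "y \<in> carrier_vec ?m" for y
  proof -
    have "(pad y \<bullet> (blk D G1 *\<^sub>v pad y)) * (Om (Suc S0) (pad y) \<bullet> (blk D G1 *\<^sub>v Om (Suc S0) (pad y))) \<ge> (pad y \<bullet> pad y)^2"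
      by (rule QC_ineq[OF Q py[OF y]])
    thus ?thesis unfolding Opad[OF y] quad[OF y] quad[OF Om_carrier] pad_sprod[OF y y] .
  qed
  show ?thesis unfolding QC_def using G1 sym1 pos ineq by blast
qed


lemma peel:
  assumes Q: "QC (Suc S0) G" and a: "a \<in> carrier_vec (2 * Suc S0)" and aa: "a \<bullet> a = 1"
    and Ga: "G *\<^sub>v a = \<beta> \<cdot>\<^sub>v a" and GOa: "G *\<^sub>v Om (Suc S0) a = \<alpha> \<cdot>\<^sub>v Om (Suc S0) a"
  shows "\<exists>W \<in> SpO (Suc S0). \<exists>G1. G1 \<in> carrier_mat (2*S0) (2*S0) \<and>
    transpose_mat W * G * W = blk (diagm 2 [\<alpha>, \<beta>]) G1 \<and> QC S0 G1 \<and>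
    char_poly G = [:- \<alpha>, 1:] * ([:- \<beta>, 1:] * char_poly G1)"
proof -
  define S where "S = Suc S0"
  define n where "n = 2 * S"
  have S1: "S \<ge> 1" by (simp add: S_def)
  have G: "G \<in> carrier_mat n n" using Q unfolding QC_def S_def n_def by auto
  from exists_SpO_col1[OF S1 a[folded S_def] aa] obtain W where W: "W \<in> SpO S" and We1: "W *\<^sub>v unit_vec n 1 = a"
    unfolding n_def by blast
  note w = SpO_D[OF W]
  have Wc: "W \<in> carrier_mat n n" and Wt: "transpose_mat W \<in> carrier_mat n n" using w unfolding n_def by auto
  have n1: "1 < n" and n0: "0 < n" unfolding n_def S_def by auto
  have We0: "W *\<^sub>v unit_vec n 0 = Om S a"
  proof -
    have "W *\<^sub>v unit_vec n 0 = W *\<^sub>v (Omega S *\<^sub>v unit_vec n 1)" unfolding n_def using Omega_unit1[of S] S1 by simp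
    also have "\<dots> = (W * Omega S) *\<^sub>v unit_vec n 1" using Wc unfolding n_def
      by (simp add: assoc_mult_mat_vec[of _ "2*S" "2*S" _ "2*S"])
    also have "\<dots> = Omega S *\<^sub>v (W *\<^sub>v unit_vec n 1)" unfolding w(4) using Wc unfolding n_def
      by (simp add: assoc_mult_mat_vec[of _ "2*S" "2*S" _ "2*S"])
    finally show ?thesis unfolding We1 .
  qed
  define Gt where "Gt = transpose_mat W * G * W"
  have QGt: "QC S Gt" unfolding Gt_def by (rule QC_congr[OF Q[folded S_def] W])
  have Gt: "Gt \<in> carrier_mat n n" using Wc Wt G by (simp add: Gt_def)
  have WtW: "\<And>x. x \<in> carrier_vec n \<Longrightarrow> transpose_mat W *\<^sub>v (W *\<^sub>v x) = x"
    using w Wc Wt unfolding n_def by (simp add: assoc_mult_mat_vec[of _ "2*S" "2*S" _ "2*S", symmetric])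
  have Gtv: "\<And>x. x \<in> carrier_vec n \<Longrightarrow> Gt *\<^sub>v x = transpose_mat W *\<^sub>v (G *\<^sub>v (W *\<^sub>v x))"
    unfolding Gt_def using Wc Wt G by (simp add: assoc_mult_mat_vec[of _ n n _ n])
  have Gte0: "Gt *\<^sub>v unit_vec n 0 = \<alpha> \<cdot>\<^sub>v unit_vec n 0"
  proof -
    have "Gt *\<^sub>v unit_vec n 0 = transpose_mat W *\<^sub>v (\<alpha> \<cdot>\<^sub>v Om S a)"
      unfolding Gtv[OF unit_vec_carrier] We0 GOa[folded S_def] ..
    also have "\<dots> = \<alpha> \<cdot>\<^sub>v (transpose_mat W *\<^sub>v (W *\<^sub>v unit_vec n 0))" unfolding We0 using Wt
      by (simp add: mult_mat_vec[of _ n n] n_def)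
    finally show ?thesis unfolding WtW[OF unit_vec_carrier] .
  qed
  have Gte1: "Gt *\<^sub>v unit_vec n 1 = \<beta> \<cdot>\<^sub>v unit_vec n 1"
  proof -
    have "Gt *\<^sub>v unit_vec n 1 = transpose_mat W *\<^sub>v (\<beta> \<cdot>\<^sub>v a)"
      unfolding Gtv[OF unit_vec_carrier] We1 Ga ..
    also have "\<dots> = \<beta> \<cdot>\<^sub>v (transpose_mat W *\<^sub>v (W *\<^sub>v unit_vec n 1))" unfolding We1 using Wt a
      by (simp add: mult_mat_vec[of _ n n] n_def S_def)
    finally show ?thesis unfolding WtW[OF unit_vec_carrier] .
  qed
  have Gt_sym: "transpose_mat Gt = Gt" using QGt unfolding QC_def by auto
  define d where "d = (\<lambda>i::nat. if i = 0 then \<alpha> else \<beta>)"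
  define G1 where "G1 = mat (2*S0) (2*S0) (\<lambda>(i,j). Gt $$ (i+2, j+2))"
  have G1: "G1 \<in> carrier_mat (2*S0) (2*S0)" by (simp add: G1_def)
  have nS: "n = 2 + 2*S0" unfolding n_def S_def by simp
  have Gt_blk0: "Gt = blk (mat 2 2 (\<lambda>(i,j). if i = j then d i else 0)) (mat (2*S0) (2*S0) (\<lambda>(i,j). Gt $$ (i+2, j+2)))"
  proof (rule blk_decomp)
    show "Gt \<in> carrier_mat (2 + 2*S0) (2 + 2*S0)" using Gt nS by simp
    show "transpose_mat Gt = Gt" by (rule Gt_sym)
    fix i j :: nat assume i: "i < 2" and j: "j < 2 + 2*S0"
    have jn: "j < n" using j nS by simp
    show "Gt $$ (j, i) = (if j = i then d i else 0)"
    proof (cases "i = 0")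
      case True
      have "Gt $$ (j, i) = (Gt *\<^sub>v unit_vec n 0) $ j" using True mult_unit_vec_index[OF Gt n0 jn] by simp
      also have "\<dots> = (if j = i then d i else 0)" unfolding Gte0 using True jn n0 by (simp add: d_def)
      finally show ?thesis .
    next
      case False
      hence i1: "i = 1" using i by simp
      have "Gt $$ (j, i) = (Gt *\<^sub>v unit_vec n 1) $ j" using i1 mult_unit_vec_index[OF Gt n1 jn] by simp
      also have "\<dots> = (if j = i then d i else 0)" unfolding Gte1 using i1 jn n1 by (simp add: d_def)
      finally show ?thesis .
    qed
  qed
  have dm: "mat 2 2 (\<lambda>(i,j). if i = j then d i else 0) = diagm 2 [\<alpha>, \<beta>]"
    by (rule eq_matI, auto simp: d_def diagm_def less2)
  have Gt_blk: "Gt = blk (diagm 2 [\<alpha>, \<beta>]) G1" using Gt_blk0 unfolding dm G1_def .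
  have "QC (Suc S0) (blk (diagm 2 [\<alpha>, \<beta>]) G1)" using QGt unfolding Gt_blk S_def .
  hence Q1: "QC S0 G1" by (rule QC_block[OF _ diagm_carrier G1])
  have "char_poly G = char_poly Gt"
  proof (rule char_poly_similar, rule similar_matI[of G Gt W "transpose_mat W" n])
    show "{G, Gt, W, transpose_mat W} \<subseteq> carrier_mat n n" using G Gt Wc Wt by auto
    show "W * transpose_mat W = 1\<^sub>m n" using w unfolding n_def by simp
    show "transpose_mat W * W = 1\<^sub>m n" using w unfolding n_def by simp
    have "W * Gt * transpose_mat W = (W * transpose_mat W) * G * (W * transpose_mat W)"
      unfolding Gt_def using Wc Wt G by (simp add: assoc_mult_mat[of _ n n _ n _ n])
    also have "\<dots> = G" using w G unfolding n_def by simp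
    finally show "G = W * Gt * transpose_mat W" by simp
  qed
  also have "\<dots> = char_poly (diagm 2 [\<alpha>, \<beta>]) * char_poly G1" unfolding Gt_blk
    by (rule char_poly_blk[OF diagm_carrier G1])
  also have "char_poly (diagm 2 [\<alpha>, \<beta>]) = [:- \<alpha>, 1:] * [:- \<beta>, 1:]"
    using char_poly_diagm[of "[\<alpha>, \<beta>]" 2] by simp
  finally have cp: "char_poly G = [:- \<alpha>, 1:] * ([:- \<beta>, 1:] * char_poly G1)" by (simp only: mult.assoc)
  show ?thesis using W G1 Gt_blk Q1 cp unfolding S_def Gt_def by blast
qed


definition apure :: "real list \<Rightarrow> nat \<Rightarrow> bool" where
  "apure L k \<longleftrightarrow> L ! k * L ! (length L - 1 - k) = 1"

definition good :: "real list \<Rightarrow> bool" where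
  "good L \<longleftrightarrow> (\<forall>k l. k < length L div 2 \<longrightarrow> l < length L div 2 \<longrightarrow> k \<noteq> l \<longrightarrow> apure L k \<or> apure L l)"

lemma prod_list_nth: "prod_list (map f xs) = (\<Prod>i<length xs. f (xs ! i) :: 'a :: comm_monoid_mult)"
proof (induct xs)
  case (Cons x xs)
  show ?case unfolding length_Cons prod.lessThan_Suc_shift using Cons by simp
qed simp

locale reduce =
  fixes m p q :: nat and \<sigma> :: "nat \<Rightarrow> nat"
  assumes mono: "\<And>i j. i < j \<Longrightarrow> j < m \<Longrightarrow> \<sigma> i < \<sigma> j"
    and img: "\<sigma> ` {..<m} = {..<m+2} - {p,q}"
    and pq: "p \<noteq> q" "p < m + 2" "q < m + 2"
    and anti: "\<And>j. j < m \<Longrightarrow> \<sigma> (m - 1 - j) = m + 1 - \<sigma> j"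
    and half: "\<And>j. j < m div 2 \<Longrightarrow> \<sigma> j < (m + 2) div 2"
begin

definition red :: "real list \<Rightarrow> real list" where "red L = map (\<lambda>j. L ! \<sigma> j) [0..<m]"

lemma red_length[simp]: "length (red L) = m" by (simp add: red_def)

lemma red_nth: "j < m \<Longrightarrow> red L ! j = L ! \<sigma> j" by (simp add: red_def)

lemma inj: "inj_on \<sigma> {..<m}"
proof (rule inj_onI)
  fix i j assume "i \<in> {..<m}" "j \<in> {..<m}" "\<sigma> i = \<sigma> j"
  thus "i = j" using mono[of i j] mono[of j i] by (cases i j rule: linorder_cases) auto
qed

lemma red_prod:
  fixes f :: "real \<Rightarrow> 'a :: comm_monoid_mult"
  assumes len: "length L = m + 2"
  shows "prod_list (map f L) = f (L ! p) * (f (L ! q) * prod_list (map f (red L)))"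
proof -
  have "prod_list (map f L) = (\<Prod>i<m+2. f (L ! i))" unfolding prod_list_nth len ..
  also have "{..<m+2} = insert p (insert q ({..<m+2} - {p,q}))" using pq by auto
  also have "(\<Prod>i\<in>insert p (insert q ({..<m+2} - {p,q})). f (L ! i)) =
     f (L ! p) * (f (L ! q) * (\<Prod>i\<in>{..<m+2} - {p,q}. f (L ! i)))"
    using pq by (simp add: prod.insert_remove insert_Diff_if)
  also have "(\<Prod>i\<in>{..<m+2} - {p,q}. f (L ! i)) = (\<Prod>i\<in>\<sigma> ` {..<m}. f (L ! i))" unfolding img ..
  also have "\<dots> = (\<Prod>j<m. f (L ! \<sigma> j))" by (subst prod.reindex[OF inj], simp)
  also have "\<dots> = prod_list (map f (red L))" unfolding prod_list_nth red_length
    by (rule prod.cong, auto simp: red_nth)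
  finally show ?thesis .
qed

lemma red_sorted:
  assumes s: "sorted_wrt (\<ge>) L" and len: "length L = m + 2"
  shows "sorted_wrt (\<ge>) (red L)"
proof -
  have "\<sigma> j < m + 2" if "j < m" for j using img that by auto
  thus ?thesis using s len mono unfolding sorted_wrt_iff_nth_less
    by (auto simp: red_nth)
qed

lemma red_apure:
  assumes len: "length L = m + 2" and j: "j < m" and a: "apure L (\<sigma> j)"
  shows "apure (red L) j"
proof -
  have "red L ! (m - 1 - j) = L ! (m + 1 - \<sigma> j)" using j anti[OF j] by (simp add: red_nth)
  thus ?thesis using a len j unfolding apure_def by (simp add: red_nth)
qed

lemma red_good:
  assumes len: "length L = m + 2" and g: "good L"
  shows "good (red L)"
  unfolding good_def
proof (intro allI impI)
  fix k l assume k: "k < length (red L) div 2" and l: "l < length (red L) div 2" and kl: "k \<noteq> l"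
  have km: "k < m" and lm: "l < m" using k l by auto
  have "\<sigma> k \<noteq> \<sigma> l" using inj kl km lm unfolding inj_on_def by blast
  moreover have "\<sigma> k < length L div 2" "\<sigma> l < length L div 2" using half k l len by auto
  ultimately have "apure L (\<sigma> k) \<or> apure L (\<sigma> l)" using g unfolding good_def by blast
  thus "apure (red L) k \<or> apure (red L) l" using red_apure[OF len] km lm by blast
qed

end

lemma reduce_A: "reduce m 0 (m+1) Suc"
proof
  show "Suc ` {..<m} = {..<m + 2} - {0, m + 1}"
  proof
    show "Suc ` {..<m} \<subseteq> {..<m + 2} - {0, m + 1}" by auto
    show "{..<m + 2} - {0, m + 1} \<subseteq> Suc ` {..<m}"
    proof
      fix x assume x: "x \<in> {..<m + 2} - {0, m + 1}"
      hence "x = Suc (x - 1)" "x - 1 < m" by auto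
      thus "x \<in> Suc ` {..<m}" by blast
    qed
  qed
qed auto

lemma reduce_B: assumes m: "m \<ge> 2"
  shows "reduce m 1 m (\<lambda>j. if j = 0 then 0 else if j = m - 1 then m + 1 else j + 1)"
    (is "reduce m 1 m ?s")
proof
  show "?s ` {..<m} = {..<m + 2} - {1, m}"
  proof
    show "?s ` {..<m} \<subseteq> {..<m + 2} - {1, m}" using m by auto
    show "{..<m + 2} - {1, m} \<subseteq> ?s ` {..<m}"
    proof
      fix x assume x: "x \<in> {..<m + 2} - {1, m}"
      show "x \<in> ?s ` {..<m}"
      proof (cases "x = 0")
        case True
        hence "x = ?s 0" "0 < m" using m by auto
        thus ?thesis by blast
      next
        case False
        show ?thesis
        proof (cases "x = m + 1")
          case True
          hence "x = ?s (m - 1)" "m - 1 < m" using m by auto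
          thus ?thesis by blast
        next
          case F2: False
          hence "x = ?s (x - 1)" "x - 1 < m" using x False m by auto
          thus ?thesis by blast
        qed
      qed
    qed
  qed
qed (use m in auto)


lemma combine:
  fixes G G' G1 G1' W1 W1' W2 D :: "real mat"
  assumes W1: "W1 \<in> SpO (Suc S0)" and W1': "W1' \<in> SpO (Suc S0)" and W2: "W2 \<in> SpO S0"
    and D: "D \<in> carrier_mat 2 2" and G1: "G1 \<in> carrier_mat (2*S0) (2*S0)"
    and G: "G \<in> carrier_mat (2*Suc S0) (2*Suc S0)" and G': "G' \<in> carrier_mat (2*Suc S0) (2*Suc S0)"
    and E1: "transpose_mat W1 * G * W1 = blk D G1"
    and E1': "transpose_mat W1' * G' * W1' = blk D G1'"
    and E2: "G1' = W2 * G1 * transpose_mat W2"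
  shows "\<exists>W \<in> SpO (Suc S0). G' = W * G * transpose_mat W"
proof -
  let ?n = "2 * Suc S0" and ?m = "2 * S0"
  note w1 = SpO_D[OF W1] and w1' = SpO_D[OF W1'] and w2 = SpO_D[OF W2]
  define B where "B = blk (1\<^sub>m 2) W2"
  have B: "B \<in> SpO (Suc S0)" unfolding B_def using SpO_blk[OF SpO_one[of 1] W2] by simp
  note b = SpO_D[OF B]
  have c: "W1 \<in> carrier_mat ?n ?n" "W1' \<in> carrier_mat ?n ?n" "B \<in> carrier_mat ?n ?n"
    "transpose_mat W1 \<in> carrier_mat ?n ?n" "transpose_mat W1' \<in> carrier_mat ?n ?n" "transpose_mat B \<in> carrier_mat ?n ?n"
    using w1 w1' b by auto
  have W2t: "transpose_mat W2 \<in> carrier_mat ?m ?m" using w2 by simp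
  note as = assoc_mult_mat[of _ ?n ?n _ ?n _ ?n]
  have Bt0: "transpose_mat (blk (1\<^sub>m 2) W2) = blk (1\<^sub>m 2) (transpose_mat W2)"
    using blk_transpose[of "1\<^sub>m 2" 2 W2 ?m] w2 by simp
  hence Bt: "transpose_mat B = blk (1\<^sub>m 2) (transpose_mat W2)" unfolding B_def .
  have step1: "G' = W1' * blk D G1' * transpose_mat W1'"
  proof -
    have "W1' * blk D G1' * transpose_mat W1' = (W1' * transpose_mat W1') * G' * (W1' * transpose_mat W1')"
      unfolding E1'[symmetric] using c G' by (simp add: as)
    also have "\<dots> = G'" using w1' G' by simp
    finally show ?thesis by simp
  qed
  have step2: "blk D G1' = B * blk D G1 * transpose_mat B"
  proof -
    have "B * blk D G1 * transpose_mat B = blk (1\<^sub>m 2 * D * 1\<^sub>m 2) (W2 * G1 * transpose_mat W2)"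
      unfolding B_def Bt0 using D G1 w2 W2t
      by (simp add: blk_mult[of _ 2 _ ?m])
    also have "\<dots> = blk D G1'" unfolding E2 using D by simp
    finally show ?thesis by simp
  qed
  define W where "W = W1' * B * transpose_mat W1"
  have W: "W \<in> SpO (Suc S0)" unfolding W_def
    by (rule SpO_mult[OF SpO_mult[OF W1' B] SpO_transpose[OF W1]])
  have Wt: "transpose_mat (W1' * B * transpose_mat W1) = W1 * transpose_mat B * transpose_mat W1'"
  proof -
    have "transpose_mat (W1' * B * transpose_mat W1) = transpose_mat (transpose_mat W1) * transpose_mat (W1' * B)"
      using c by (intro transpose_mult[of _ ?n ?n]) auto
    also have "transpose_mat (W1' * B) = transpose_mat B * transpose_mat W1'"
      using c by (intro transpose_mult[of _ ?n ?n]) auto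
    finally show ?thesis using c by (simp add: as)
  qed
  have "G' = W1' * (B * (transpose_mat W1 * G * W1) * transpose_mat B) * transpose_mat W1'"
    unfolding step1 step2 E1 ..
  also have "\<dots> = W * G * transpose_mat W" unfolding W_def Wt using c G by (simp add: as)
  finally show ?thesis using W by blast
qed


lemma cancel_lin: "[:- a, 1:] * (x :: real poly) = [:- a, 1:] * y \<Longrightarrow> x = y"
proof -
  assume "[:- a, 1:] * x = [:- a, 1:] * y"
  moreover have "[:- a, 1:] \<noteq> (0 :: real poly)" by simp
  ultimately show "x = y" using mult_left_cancel by blast
qed

theorem main_ind:
  "QC S G \<Longrightarrow> QC S G' \<Longrightarrow> char_poly G = prod_list (map (\<lambda>l. [:- l, 1:]) Lam) \<Longrightarrow>
   char_poly G' = prod_list (map (\<lambda>l. [:- l, 1:]) Lam) \<Longrightarrow> sorted_wrt (\<ge>) Lam \<Longrightarrow> good Lam \<Longrightarrow>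
   \<exists>W \<in> SpO S. G' = W * G * transpose_mat W"
proof (induct S arbitrary: G G' Lam)
  case 0
  have G: "G \<in> carrier_mat 0 0" and G': "G' \<in> carrier_mat 0 0" using 0 unfolding QC_def by auto
  show ?case
    by (rule bexI[of _ "1\<^sub>m 0"], insert G G', auto intro!: eq_matI, insert SpO_one[of 0], simp)
next
  case (Suc S0 G G' Lam)
  note Q = Suc(2) and Q' = Suc(3) and cp = Suc(4) and cp' = Suc(5) and sorted = Suc(6) and g = Suc(7)
  define n where "n = 2 * Suc S0"
  define m where "m = 2 * S0"
  have nm: "n = m + 2" unfolding n_def m_def by simp
  have G: "G \<in> carrier_mat n n" and symG: "transpose_mat G = G" using Q unfolding QC_def n_def by auto
  have G': "G' \<in> carrier_mat n n" and symG': "transpose_mat G' = G'" using Q' unfolding QC_def n_def by auto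
  have len: "length Lam = n" by (rule length_eigen[OF G cp])
  obtain U where U: "U \<in> carrier_mat n n" and Uo: "transpose_mat U * U = 1\<^sub>m n"
    and UD: "transpose_mat U * G * U = diagm n Lam" using spectral[OF G symG cp] by blast
  obtain U' where U': "U' \<in> carrier_mat n n" and Uo': "transpose_mat U' * U' = 1\<^sub>m n"
    and UD': "transpose_mat U' * G' * U' = diagm n Lam" using spectral[OF G' symG' cp'] by blast
  have sp: "spec n G U Lam" by (unfold_locales, insert G U Uo UD len, auto)
  have sp': "spec n G' U' Lam" by (unfold_locales, insert G' U' Uo' UD' len, auto)
  have pairs: "\<exists>p q \<sigma>. reduce m p q \<sigma> \<and> (\<forall>X V. QC (Suc S0) X \<longrightarrow> spec n X V Lam \<longrightarrow>
     (\<exists>a \<in> carrier_vec n. a \<bullet> a = 1 \<and> X *\<^sub>v a = Lam ! q \<cdot>\<^sub>v a \<and> X *\<^sub>v Om (Suc S0) a = Lam ! p \<cdot>\<^sub>v Om (Suc S0) a))"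
  proof (cases "S0 = 0 \<or> apure Lam 0")
    case True
    have "\<forall>X V. QC (Suc S0) X \<longrightarrow> spec n X V Lam \<longrightarrow>
     (\<exists>a \<in> carrier_vec n. a \<bullet> a = 1 \<and> X *\<^sub>v a = Lam ! (m+1) \<cdot>\<^sub>v a \<and> X *\<^sub>v Om (Suc S0) a = Lam ! 0 \<cdot>\<^sub>v Om (Suc S0) a)"
    proof (intro allI impI)
      fix X V assume QX: "QC (Suc S0) X" and spX: "spec n X V Lam"
      show "\<exists>a \<in> carrier_vec n. a \<bullet> a = 1 \<and> X *\<^sub>v a = Lam ! (m+1) \<cdot>\<^sub>v a \<and> X *\<^sub>v Om (Suc S0) a = Lam ! 0 \<cdot>\<^sub>v Om (Suc S0) a"
      proof (cases "S0 = 0")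
        case True
        hence "spec 2 X V Lam" using spX unfolding n_def by simp
        from find_S1[OF this] show ?thesis using True unfolding n_def m_def by simp
      next
        case False
        hence pure: "Lam ! 0 * Lam ! (2 * Suc S0 - 1) = 1" using \<open>S0 = 0 \<or> apure Lam 0\<close> len
          unfolding apure_def n_def by simp
        have spX': "spec (2 * Suc S0) X V Lam" using spX unfolding n_def .
        from find_A[OF spX' QX sorted _ pure] show ?thesis unfolding n_def m_def by simp
      qed
    qed
    thus ?thesis using reduce_A[of m] by blast
  next
    case False
    hence S0: "S0 \<ge> 1" and np0: "\<not> apure Lam 0" by auto
    have h: "length Lam div 2 = Suc S0" using len unfolding n_def by simp
    have "apure Lam 0 \<or> apure Lam 1"
      using g unfolding good_def h using S0 by (metis One_nat_def Suc_le_mono zero_less_Suc zero_neq_one le_imp_less_Suc)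
    hence a1: "apure Lam 1" using np0 by simp
    have "\<forall>X V. QC (Suc S0) X \<longrightarrow> spec n X V Lam \<longrightarrow>
     (\<exists>a \<in> carrier_vec n. a \<bullet> a = 1 \<and> X *\<^sub>v a = Lam ! m \<cdot>\<^sub>v a \<and> X *\<^sub>v Om (Suc S0) a = Lam ! 1 \<cdot>\<^sub>v Om (Suc S0) a)"
    proof (intro allI impI)
      fix X V assume QX: "QC (Suc S0) X" and spX: "spec n X V Lam"
      have pure: "Lam ! 1 * Lam ! (2 * Suc S0 - 2) = 1" using a1 len unfolding apure_def n_def by simp
      have spX': "spec (2 * Suc S0) X V Lam" using spX unfolding n_def .
      from find_B[OF spX' QX sorted _ pure] S0
      show "\<exists>a \<in> carrier_vec n. a \<bullet> a = 1 \<and> X *\<^sub>v a = Lam ! m \<cdot>\<^sub>v a \<and> X *\<^sub>v Om (Suc S0) a = Lam ! 1 \<cdot>\<^sub>v Om (Suc S0) a"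
        unfolding n_def m_def by simp
    qed
    moreover have "m \<ge> 2" using S0 unfolding m_def by simp
    ultimately show ?thesis using reduce_B[of m] by blast
  qed
  then obtain p q \<sigma> where red: "reduce m p q \<sigma>" and
    pr: "\<And>X V. QC (Suc S0) X \<Longrightarrow> spec n X V Lam \<Longrightarrow>
     (\<exists>a \<in> carrier_vec n. a \<bullet> a = 1 \<and> X *\<^sub>v a = Lam ! q \<cdot>\<^sub>v a \<and> X *\<^sub>v Om (Suc S0) a = Lam ! p \<cdot>\<^sub>v Om (Suc S0) a)"
    by blast
  interpret reduce m p q \<sigma> by (rule red)
  from pr[OF Q sp] obtain a where a: "a \<in> carrier_vec n" "a \<bullet> a = 1" "G *\<^sub>v a = Lam ! q \<cdot>\<^sub>v a"
    "G *\<^sub>v Om (Suc S0) a = Lam ! p \<cdot>\<^sub>v Om (Suc S0) a" by blast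
  from pr[OF Q' sp'] obtain a' where a': "a' \<in> carrier_vec n" "a' \<bullet> a' = 1" "G' *\<^sub>v a' = Lam ! q \<cdot>\<^sub>v a'"
    "G' *\<^sub>v Om (Suc S0) a' = Lam ! p \<cdot>\<^sub>v Om (Suc S0) a'" by blast
  from peel[OF Q a(1)[unfolded n_def] a(2-4)] obtain W1 G1 where W1: "W1 \<in> SpO (Suc S0)"
    and G1: "G1 \<in> carrier_mat (2*S0) (2*S0)" and E1: "transpose_mat W1 * G * W1 = blk (diagm 2 [Lam ! p, Lam ! q]) G1"
    and Q1: "QC S0 G1" and cp1: "char_poly G = [:- Lam ! p, 1:] * ([:- Lam ! q, 1:] * char_poly G1)" by blast
  from peel[OF Q' a'(1)[unfolded n_def] a'(2-4)] obtain W1' G1' where W1': "W1' \<in> SpO (Suc S0)"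
    and G1': "G1' \<in> carrier_mat (2*S0) (2*S0)" and E1': "transpose_mat W1' * G' * W1' = blk (diagm 2 [Lam ! p, Lam ! q]) G1'"
    and Q1': "QC S0 G1'" and cp1': "char_poly G' = [:- Lam ! p, 1:] * ([:- Lam ! q, 1:] * char_poly G1')" by blast
  have lenm: "length Lam = m + 2" using len nm by simp
  have rp: "prod_list (map (\<lambda>l. [:- l, 1:]) Lam) = [:- Lam ! p, 1:] * ([:- Lam ! q, 1:] * prod_list (map (\<lambda>l. [:- l, 1:]) (red Lam)))"
    by (rule red_prod[OF lenm])
  have cG1: "char_poly G1 = prod_list (map (\<lambda>l. [:- l, 1:]) (red Lam))"
    using cp1 cp rp by (metis cancel_lin)
  have cG1': "char_poly G1' = prod_list (map (\<lambda>l. [:- l, 1:]) (red Lam))"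
    using cp1' cp' rp by (metis cancel_lin)
  have s1: "sorted_wrt (\<ge>) (red Lam)" by (rule red_sorted[OF sorted lenm])
  have g1: "good (red Lam)" by (rule red_good[OF lenm g])
  from Suc(1)[OF Q1 Q1' cG1 cG1' s1 g1] obtain W2 where W2: "W2 \<in> SpO S0"
    and E2: "G1' = W2 * G1 * transpose_mat W2" by blast
  show ?case
    by (rule combine[OF W1 W1' W2 diagm_carrier G1 _ _ E1 E1' E2], insert G G', auto simp: n_def)
qed


lemma pm_partner:
  assumes M: "perfect_matching L M" and v: "v < length L"
  shows "\<exists>w. w < length L \<and> w \<noteq> v \<and> {v, w} \<in> M \<and> L ! v * L ! w \<ge> 1"
proof -
  obtain e where e: "e \<in> M" "v \<in> e" using M v unfolding perfect_matching_def by blast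
  have "lam_edge L e" using M e unfolding perfect_matching_def by blast
  then obtain i j where ij: "e = {i,j}" "i < j" "j < length L" "L ! i * L ! j \<ge> 1" unfolding lam_edge_def by blast
  show ?thesis
  proof (cases "v = i")
    case True thus ?thesis using ij e by (intro exI[of _ j]) auto
  next
    case False
    hence "v = j" using e ij by auto
    thus ?thesis using ij e by (intro exI[of _ i]) (auto simp: insert_commute mult.commute)
  qed
qed

lemma antipodal_ge1:
  assumes M: "perfect_matching L M" and len: "length L = 2 * S"
    and sorted: "sorted_wrt (\<ge>) L" and pos: "\<And>i. i < length L \<Longrightarrow> L ! i > 0" and k: "k < S"
  shows "L ! k * L ! (2*S - 1 - k) \<ge> 1"
proof (rule ccontr)
  assume neg: "\<not> ?thesis"
  define n where "n = 2 * S"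
  define B where "B = {n - 1 - k..<n}"
  have "\<forall>v \<in> B. \<exists>w. w < n \<and> w \<noteq> v \<and> {v, w} \<in> M \<and> L ! v * L ! w \<ge> 1"
    using pm_partner[OF M] len unfolding B_def n_def by auto
  then obtain f where f: "\<And>v. v \<in> B \<Longrightarrow> f v < n \<and> f v \<noteq> v \<and> {v, f v} \<in> M \<and> L ! v * L ! f v \<ge> 1"
    by metis
  have sle: "L ! j \<le> L ! i" if "i \<le> j" "j < n" for i j
    using sorted that len unfolding n_def by (cases "i = j") (auto simp: sorted_wrt_iff_nth_less)
  have fk: "f v < k" if v: "v \<in> B" for v
  proof (rule ccontr)
    assume "\<not> f v < k"
    hence fvk: "k \<le> f v" by simp
    have vn: "v < n" "n - 1 - k \<le> v" using v unfolding B_def by auto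
    have kn: "k < n" "n - 1 - k < n" using k unfolding n_def by auto
    have "L ! v * L ! f v \<le> L ! (n - 1 - k) * L ! k"
    proof (rule mult_mono)
      show "L ! v \<le> L ! (n - 1 - k)" using sle[OF vn(2) vn(1)] .
      show "L ! f v \<le> L ! k" using sle[OF fvk] f[OF v] by simp
      show "0 \<le> L ! (n - 1 - k)" using pos kn len unfolding n_def by (simp add: less_imp_le)
      show "0 \<le> L ! f v" using pos f[OF v] len unfolding n_def by (simp add: less_imp_le)
    qed
    also have "\<dots> < 1" using neg unfolding n_def by (simp add: mult.commute)
    finally show False using f[OF v] by simp
  qed
  have inj: "inj_on f B"
  proof (rule inj_onI)
    fix v v' assume v: "v \<in> B" and v': "v' \<in> B" and eq: "f v = f v'"
    have "f v < length L" using f[OF v] len unfolding n_def by simp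
    then obtain e where "e \<in> M \<and> f v \<in> e" "\<forall>e'. e' \<in> M \<and> f v \<in> e' \<longrightarrow> e' = e"
      using M unfolding perfect_matching_def by metis
    hence "{v, f v} = {v', f v'}" using f[OF v] f[OF v'] eq by auto
    thus "v = v'" using f[OF v] f[OF v'] eq by (auto simp: doubleton_eq_iff)
  qed
  have "card B \<le> card {..<k}"
    by (rule card_inj_on_le[OF inj], insert fk, auto)
  moreover have "card B = k + 1" unfolding B_def n_def using k by simp
  ultimately show False by simp
qed


definition ed :: "nat \<Rightarrow> nat \<Rightarrow> nat set" where "ed n k = {k, n - 1 - k}"

lemma ed_inj: "inj_on (ed (2*S)) {..<S}"
proof (rule inj_onI)
  fix k l assume k: "k \<in> {..<S}" and l: "l \<in> {..<S}" and e: "ed (2*S) k = ed (2*S) l"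
  hence "k \<in> {l, 2*S - 1 - l}" unfolding ed_def by auto
  thus "k = l" using k l by auto
qed

lemma ed_card: "card (ed (2*S) ` {..<S}) = S"
  using card_image[OF ed_inj] by simp

lemma antipodal_pm:
  assumes len: "length L = 2 * S" and ge: "\<And>k. k < S \<Longrightarrow> L ! k * L ! (2*S - 1 - k) \<ge> 1"
  shows "perfect_matching L (ed (2*S) ` {..<S})"
  unfolding perfect_matching_def
proof (intro conjI ballI allI impI)
  fix e assume "e \<in> ed (2*S) ` {..<S}"
  then obtain k where k: "k < S" and e: "e = {k, 2*S - 1 - k}" unfolding ed_def by auto
  show "lam_edge L e" unfolding lam_edge_def using k e ge[OF k] len
    by (intro exI[of _ k] exI[of _ "2*S - 1 - k"]) auto
next
  fix v assume v: "v < length L"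
  define k where "k = (if v < S then v else 2*S - 1 - v)"
  have k: "k < S" "v \<in> ed (2*S) k" using v len unfolding k_def ed_def by auto
  show "\<exists>!e. e \<in> ed (2*S) ` {..<S} \<and> v \<in> e"
  proof (rule ex1I[of _ "ed (2*S) k"])
    show "ed (2*S) k \<in> ed (2*S) ` {..<S} \<and> v \<in> ed (2*S) k" using k by auto
    fix e assume "e \<in> ed (2*S) ` {..<S} \<and> v \<in> e"
    then obtain l where l: "l < S" "e = ed (2*S) l" "v \<in> ed (2*S) l" by auto
    have "l = k" using l v len unfolding k_def ed_def by auto
    thus "e = ed (2*S) k" using l by simp
  qed
qed

lemma pure_ed:
  assumes len: "length L = 2 * S" and k: "k < S" and p: "pure_edge L (ed (2*S) k)"
  shows "apure L k"
proof -
  obtain i j where ij: "{k, 2*S - 1 - k} = {i,j}" "i < j" "L ! i * L ! j = 1"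
    using p unfolding pure_edge_def ed_def by blast
  have "k < 2*S - 1 - k" using k by simp
  hence "i = k" "j = 2*S - 1 - k" using ij by (auto simp: doubleton_eq_iff)
  thus ?thesis using ij len unfolding apure_def by simp
qed

lemma pure_perm:
  assumes \<pi>: "\<pi> permutes {0..<length L}" and val: "\<And>i. i < length L \<Longrightarrow> L ! (\<pi> i) = L ! i"
    and p: "pure_edge L e"
  shows "pure_edge L (\<pi> ` e)"
proof -
  obtain i j where ij: "e = {i,j}" "i < j" "j < length L" "L ! i * L ! j = 1"
    using p unfolding pure_edge_def by blast
  have pi: "\<pi> i < length L" "\<pi> j < length L" using ij \<pi> by (auto simp: permutes_in_image)
  have ne: "\<pi> i \<noteq> \<pi> j" using ij permutes_inj[OF \<pi>] by (auto simp: inj_eq)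
  have vals: "L ! \<pi> i * L ! \<pi> j = 1" using val ij by simp
  have img: "\<pi> ` e = {\<pi> i, \<pi> j}" using ij by simp
  show ?thesis
  proof (cases "\<pi> i < \<pi> j")
    case True thus ?thesis unfolding pure_edge_def img using pi vals
      by (intro exI[of _ "\<pi> i"] exI[of _ "\<pi> j"]) auto
  next
    case False
    hence "\<pi> j < \<pi> i" using ne by simp
    thus ?thesis unfolding pure_edge_def img using pi vals
      by (intro exI[of _ "\<pi> j"] exI[of _ "\<pi> i"]) (auto simp: insert_commute mult.commute)
  qed
qed

lemma tpure_good:
  assumes tp: "t_pure_unique_pairing (S - 1) L" and len: "length L = 2 * S"
    and sorted: "sorted_wrt (\<ge>) L" and pos: "\<And>i. i < length L \<Longrightarrow> L ! i > 0"
  shows "good L"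
proof -
  let ?A = "ed (2*S) ` {..<S}"
  from tp obtain M where M: "perfect_matching L M" unfolding t_pure_unique_pairing_def unique_pairing_def by blast
  have A: "perfect_matching L ?A"
    by (rule antipodal_pm[OF len], rule antipodal_ge1[OF M len sorted pos])
  from tp obtain M0 where M0: "perfect_matching L M0" and c0: "card {e \<in> M0. pure_edge L e} \<ge> S - 1"
    unfolding t_pure_unique_pairing_def by blast
  from tp M0 A obtain \<pi> where \<pi>: "\<pi> permutes {0..<length L}" and val: "\<forall>i < length L. L ! (\<pi> i) = L ! i"
    and img: "(\<lambda>e. \<pi> ` e) ` M0 = ?A"
    unfolding t_pure_unique_pairing_def unique_pairing_def by blast
  let ?P0 = "{e \<in> M0. pure_edge L e}" and ?PA = "{e \<in> ?A. pure_edge L e}"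
  have sub: "(\<lambda>e. \<pi> ` e) ` ?P0 \<subseteq> ?PA"
    using img pure_perm[OF \<pi>] val by blast
  have inj: "inj_on (\<lambda>e. \<pi> ` e) ?P0"
    using permutes_inj[OF \<pi>] by (auto simp: inj_on_def inj_image_eq_iff)
  have finA: "finite ?PA" by simp
  have "card ?P0 \<le> card ?PA" by (rule card_inj_on_le[OF inj sub finA])
  hence cA: "S - 1 \<le> card ?PA" using c0 by simp
  show ?thesis unfolding good_def
  proof (intro allI impI)
    fix k l assume k: "k < length L div 2" and l: "l < length L div 2" and kl: "k \<noteq> l"
    hence kS: "k < S" and lS: "l < S" using len by auto
    show "apure L k \<or> apure L l"
    proof (rule ccontr)
      assume "\<not> (apure L k \<or> apure L l)"
      hence nk: "\<not> pure_edge L (ed (2*S) k)" and nl: "\<not> pure_edge L (ed (2*S) l)"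
        using pure_ed[OF len kS] pure_ed[OF len lS] by auto
      have dif: "ed (2*S) k \<noteq> ed (2*S) l" using ed_inj[of S] kS lS kl unfolding inj_on_def by blast
      have "?PA \<subseteq> ?A - {ed (2*S) k, ed (2*S) l}" using nk nl by auto
      hence "card ?PA \<le> card (?A - {ed (2*S) k, ed (2*S) l})" by (intro card_mono) auto
      also have "\<dots> = S - 2"
        using ed_card[of S] dif kS lS by (simp add: card_Diff_subset)
      finally have "card ?PA \<le> S - 2" .
      moreover have "S \<ge> 2" using kS lS kl by linarith
      ultimately show False using cA by linarith
    qed
  qed
qed


theorem theorem1:
  fixes S :: nat and G G' :: "real mat" and Lam :: "real list"
  assumes "S \<ge> 1"
    and "quantum_CM S G" and "quantum_CM S G'"
    and "eigenspectrum S G Lam" and "eigenspectrum S G' Lam"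
    and "t_pure_unique_pairing (S - 1) Lam"
  shows "\<exists>W \<in> SpO S. G' = W * G * transpose_mat W"
proof -
  have Q: "QC S G" and Q': "QC S G'" using assms(2,3) quantum_CM_QC by auto
  have G: "G \<in> carrier_mat (2*S) (2*S)" and symG: "transpose_mat G = G" using Q unfolding QC_def by auto
  have len: "length Lam = 2*S" and sorted: "sorted_wrt (\<ge>) Lam"
    and cp: "char_poly G = prod_list (map (\<lambda>l. [:- l, 1:]) Lam)"
    using assms(4) unfolding eigenspectrum_def by auto
  have cp': "char_poly G' = prod_list (map (\<lambda>l. [:- l, 1:]) Lam)"
    using assms(5) unfolding eigenspectrum_def by auto
  obtain U where U: "U \<in> carrier_mat (2*S) (2*S)" and Uo: "transpose_mat U * U = 1\<^sub>m (2*S)"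
    and UD: "transpose_mat U * G * U = diagm (2*S) Lam" using spectral[OF G symG cp] by blast
  interpret spec "2*S" G U Lam by (unfold_locales, insert G U Uo UD len, auto)
  have pos: "\<And>i. i < length Lam \<Longrightarrow> Lam ! i > 0"
    using eig_pos[OF QC_pos[OF Q]] len by auto
  have g: "good Lam" by (rule tpure_good[OF assms(6) len sorted pos])
  show ?thesis by (rule main_ind[OF Q Q' cp cp' sorted g])
qed


end
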